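(* Along any solution of the Euler–Lagrange equations (i.e. $\Upsilon_k^n=0$ for all $k,n$), one has $\partial_{t^\ell}\mathscr L_k-\partial_{t^k}\mathscr L_\ell=\{H_k,H_\ell\}_R$. Consequently the closure relation $d\mathscr L=0$ on shell for the Lagrangian one-form $\mathscr L=\mathscr L_k\,dt^k$ is equivalent to the involutivity $\{H_k,H_\ell\}_R=0$ of the Hamiltonians with respect to the Lie–Poisson $R$-bracket.
   Context: Setting: $\mathfrak g$ complex matrix Lie algebra with dual $\mathfrak g^*$; $R:\mathfrak g\to\mathfrak g$ solves the modified classical Yang–Baxter equation $[RX,RY]-R([RX,Y]+[X,RY])=-[X,Y]$; $[X,Y]_R=\frac12([RX,Y]+[X,RY])$; $G_R$ the Lie group of $(\mathfrak g,[\cdot,\cdot]_R)$ with associative product $\cdot_R$; $\Lambda\in\mathfrak g^*$, $\mathcal O_\Lambda=\{\mathrm{Ad}^{R*}_\varphi\Lambda:\varphi\in G_R\}$; $\{f,g\}_R(\xi)=(\xi,[\nabla f,\nabla g]_R)$. For $\varphi:\mathbb R^N\to G_R$ and $L=\mathrm{Ad}^{R*}_\varphi\Lambda$, $\mathscr L_k=(L,\partial_{t^k}\varphi\cdot_R\varphi^{-1})-H_k(L)$ with smooth functions $H_k$ on $\mathfrak g^*$. With local coordinates $\xi_m$ on $\mathcal O_\Lambda$, Kostant–Kirillov–Souriau form $\omega_R=\omega_{mn}\delta\xi_m\wedge\delta\xi_n$ (antisymmetric $\omega_{mn}$, normalised so that its pullback to $G_R$ has coefficients $\partial\pi_\alpha/\partial\phi_\beta-\partial\pi_\beta/\partial\phi_\alpha$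 with $\pi_\alpha=(\Lambda,\varphi^{-1}\cdot_R\partial\varphi/\partial\phi_\alpha)$ in local coordinates $\phi_\alpha$ of $G_R$), the Euler–Lagrange equations of $\mathscr L_k$ are $\Upsilon_k^n:=\sum_m\omega_{mn}\partial_{t^k}\xi_m-\partial H_k/\partial\xi_n=0$. *)

theory Defs
  imports "HOL-Analysis.Analysis"
begin

fun dd :: "'a list \<Rightarrow> ('a::real_normed_vector \<Rightarrow> 'b::real_normed_vector) \<Rightarrow> 'a \<Rightarrow> 'b" where
  "dd [] f = f"
| "dd (v # vs) f = (\<lambda>x. frechet_derivative (dd vs f) (at x) v)"

definition smooth_on :: "'a::real_normed_vector set \<Rightarrow> ('a \<Rightarrow> 'b::real_normed_vector) \<Rightarrow> bool" where
  "smooth_on S f \<longleftrightarrow> (\<forall>vs. \<forall>x\<in>S. dd vs f differentiable (at x))"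

definition holo_scalar_on :: "(complex^'d) set \<Rightarrow> (complex^'d \<Rightarrow> complex) \<Rightarrow> bool" where
  "holo_scalar_on S f \<longleftrightarrow> smooth_on S f \<and>
     (\<forall>x\<in>S. \<forall>(c::complex) v. frechet_derivative f (at x) (c *s v) = c * frechet_derivative f (at x) v)"

definition holo_vec_on :: "(complex^'c) set \<Rightarrow> (complex^'c \<Rightarrow> complex^'d) \<Rightarrow> bool" where
  "holo_vec_on S f \<longleftrightarrow> smooth_on S f \<and>
     (\<forall>x\<in>S. \<forall>(c::complex) v. frechet_derivative f (at x) (c *s v) = c *s frechet_derivative f (at x) v)"

definition tpartial :: "(real^'N \<Rightarrow> 'b::real_normed_vector) \<Rightarrow> 'N \<Rightarrow> real^'N \<Rightarrow> 'b" where
  "tpartial f k t = frechet_derivative f (at t) (axis k 1)"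

definition msc :: "complex \<Rightarrow> complex^'n^'n \<Rightarrow> complex^'n^'n" where
  "msc c M = (\<chi> i j. c * M $ i $ j)"

definition comm :: "complex^'n^'n \<Rightarrow> complex^'n^'n \<Rightarrow> complex^'n^'n" where
  "comm X Y = X ** Y - Y ** X"

definition lincomb :: "('d::finite \<Rightarrow> complex^'n^'n) \<Rightarrow> complex^'d \<Rightarrow> complex^'n^'n" where
  "lincomb e c = (\<Sum>a\<in>UNIV. msc (c $ a) (e a))"

definition gset :: "('d::finite \<Rightarrow> complex^'n^'n) \<Rightarrow> (complex^'n^'n) set" where
  "gset e = range (lincomb e)"

definition coords :: "('d::finite \<Rightarrow> complex^'n^'n) \<Rightarrow> complex^'n^'n \<Rightarrow> complex^'d" where
  "coords e X = (THE c. lincomb e c = X)"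

definition matrix_lie_algebra_basis :: "('d::finite \<Rightarrow> complex^'n^'n) \<Rightarrow> bool" where
  "matrix_lie_algebra_basis e \<longleftrightarrow>
     (\<forall>c. lincomb e c = 0 \<longrightarrow> c = 0) \<and>
     (\<forall>X\<in>gset e. \<forall>Y\<in>gset e. comm X Y \<in> gset e)"

text \<open>Elements of the dual g* are represented by their components xi_a = (xi, e_a);
the pairing (xi, X).\<close>

definition pair :: "('d::finite \<Rightarrow> complex^'n^'n) \<Rightarrow> complex^'d \<Rightarrow> complex^'n^'n \<Rightarrow> complex" where
  "pair e \<xi> X = (\<Sum>a\<in>UNIV. \<xi> $ a * coords e X $ a)"

definition mCYBE :: "('d::finite \<Rightarrow> complex^'n^'n) \<Rightarrow> (complex^'n^'n \<Rightarrow> complex^'n^'n) \<Rightarrow> bool" where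
  "mCYBE e R \<longleftrightarrow>
     (\<forall>X\<in>gset e. R X \<in> gset e) \<and>
     (\<forall>X\<in>gset e. \<forall>Y\<in>gset e. R (X + Y) = R X + R Y) \<and>
     (\<forall>X\<in>gset e. \<forall>c. R (msc c X) = msc c (R X)) \<and>
     (\<forall>X\<in>gset e. \<forall>Y\<in>gset e.
        comm (R X) (R Y) - R (comm (R X) Y + comm X (R Y)) = - comm X Y)"

definition brR :: "(complex^'n^'n \<Rightarrow> complex^'n^'n) \<Rightarrow> complex^'n^'n \<Rightarrow> complex^'n^'n \<Rightarrow> complex^'n^'n" where
  "brR R X Y = msc (1/2) (comm (R X) Y + comm X (R Y))"

section \<open>The group G_R, realised by a faithful matrix representation rho of (g,[.,.]_R)\<close>

definition faithful_rep ::
  "('d::finite \<Rightarrow> complex^'n^'n) \<Rightarrow> (complex^'n^'n \<Rightarrow> complex^'n^'n) \<Rightarrow> (complex^'n^'n \<Rightarrow> complex^'m^'m) \<Rightarrow> bool" where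
  "faithful_rep e R \<rho> \<longleftrightarrow>
     inj_on \<rho> (gset e) \<and>
     (\<forall>X\<in>gset e. \<forall>Y\<in>gset e. \<rho> (X + Y) = \<rho> X + \<rho> Y) \<and>
     (\<forall>X\<in>gset e. \<forall>c. \<rho> (msc c X) = (\<chi> i j. c * \<rho> X $ i $ j)) \<and>
     (\<forall>X\<in>gset e. \<forall>Y\<in>gset e. \<rho> (brR R X Y) = \<rho> X ** \<rho> Y - \<rho> Y ** \<rho> X)"

text \<open>G_R: the connected matrix Lie group with Lie algebra rho(g): all matrices joined to
the identity by a C^1 path whose right Maurer--Cartan form lies in rho(g).
Its associative product (.)_R is matrix multiplication.\<close>

definition GR :: "('d::finite \<Rightarrow> complex^'n^'n) \<Rightarrow> (complex^'n^'n \<Rightarrow> complex^'m^'m) \<Rightarrow> (complex^'m^'m) set" where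
  "GR e \<rho> = {A. \<exists>\<gamma> \<gamma>'. \<gamma> 0 = mat 1 \<and> \<gamma> 1 = A \<and> continuous_on {0..1::real} \<gamma>' \<and>
      (\<forall>s\<in>{0..1}. (\<gamma> has_vector_derivative \<gamma>' s) (at s within {0..1}) \<and>
          invertible (\<gamma> s) \<and> \<gamma>' s ** matrix_inv (\<gamma> s) \<in> \<rho> ` gset e)}"

definition AdR :: "('d::finite \<Rightarrow> complex^'n^'n) \<Rightarrow> (complex^'n^'n \<Rightarrow> complex^'m^'m) \<Rightarrow> complex^'m^'m \<Rightarrow> complex^'n^'n \<Rightarrow> complex^'n^'n" where
  "AdR e \<rho> A X = inv_into (gset e) \<rho> (A ** \<rho> X ** matrix_inv A)"

definition coadR :: "('d::finite \<Rightarrow> complex^'n^'n) \<Rightarrow> (complex^'n^'n \<Rightarrow> complex^'m^'m) \<Rightarrow> complex^'m^'m \<Rightarrow> complex^'d \<Rightarrow> complex^'d" where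
  "coadR e \<rho> A \<Lambda> = (\<chi> a. pair e \<Lambda> (AdR e \<rho> (matrix_inv A) (e a)))"

definition orbitR :: "('d::finite \<Rightarrow> complex^'n^'n) \<Rightarrow> (complex^'n^'n \<Rightarrow> complex^'m^'m) \<Rightarrow> complex^'d \<Rightarrow> (complex^'d) set" where
  "orbitR e \<rho> \<Lambda> = (\<lambda>A. coadR e \<rho> A \<Lambda>) ` GR e \<rho>"

definition adstarR :: "('d::finite \<Rightarrow> complex^'n^'n) \<Rightarrow> (complex^'n^'n \<Rightarrow> complex^'n^'n) \<Rightarrow> complex^'n^'n \<Rightarrow> complex^'d \<Rightarrow> complex^'d" where
  "adstarR e R X \<xi> = (\<chi> a. pair e \<xi> (brR R (e a) X))"

definition grad :: "('d::finite \<Rightarrow> complex^'n^'n) \<Rightarrow> (complex^'d \<Rightarrow> complex) \<Rightarrow> complex^'d \<Rightarrow> complex^'n^'n" where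
  "grad e f \<xi> = lincomb e (\<chi> a. frechet_derivative f (at \<xi>) (axis a 1))"

definition PBR :: "('d::finite \<Rightarrow> complex^'n^'n) \<Rightarrow> (complex^'n^'n \<Rightarrow> complex^'n^'n) \<Rightarrow> (complex^'d \<Rightarrow> complex) \<Rightarrow> (complex^'d \<Rightarrow> complex) \<Rightarrow> complex^'d \<Rightarrow> complex" where
  "PBR e R f g \<xi> = pair e \<xi> (brR R (grad e f \<xi>) (grad e g \<xi>))"

text \<open>chi : U -> O_Lambda is a holomorphic local parametrisation (inverse of local
coordinates xi_m) of the coadjoint orbit.\<close>

definition orbit_chart ::
  "('d::finite \<Rightarrow> complex^'n^'n) \<Rightarrow> (complex^'n^'n \<Rightarrow> complex^'n^'n) \<Rightarrow> (complex^'n^'n \<Rightarrow> complex^'m^'m) \<Rightarrow> complex^'d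
    \<Rightarrow> (complex^'c) set \<Rightarrow> (complex^'c \<Rightarrow> complex^'d) \<Rightarrow> bool" where
  "orbit_chart e R \<rho> \<Lambda> U \<chi>' \<longleftrightarrow> open U \<and> holo_vec_on U \<chi>' \<and> inj_on \<chi>' U \<and> \<chi>' ` U \<subseteq> orbitR e \<rho> \<Lambda> \<and>
     (\<forall>u\<in>U. inj (frechet_derivative \<chi>' (at u)) \<and>
        range (frechet_derivative \<chi>' (at u)) = {adstarR e R X (\<chi>' u) | X. X \<in> gset e})"

text \<open>omega u m n: the (antisymmetric) coefficients of the KKS form omega_R =
omega_mn dxi_m /\ dxi_n in these coordinates, with the normalisation of the paper, i.e.
omega(ad*_X xi, ad*_Y xi) = (xi, [X,Y]_R).\<close>

definition KKS_coeffs ::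
  "('d::finite \<Rightarrow> complex^'n^'n) \<Rightarrow> (complex^'n^'n \<Rightarrow> complex^'n^'n) \<Rightarrow> (complex^'c) set \<Rightarrow> (complex^'c \<Rightarrow> complex^'d)
    \<Rightarrow> (complex^'c \<Rightarrow> 'c \<Rightarrow> 'c \<Rightarrow> complex) \<Rightarrow> bool" where
  "KKS_coeffs e R U \<chi>' \<omega> \<longleftrightarrow>
     (\<forall>u\<in>U. (\<forall>m n. \<omega> u m n = - \<omega> u n m) \<and>
        (\<forall>X\<in>gset e. \<forall>Y\<in>gset e. \<forall>v w.
           frechet_derivative \<chi>' (at u) v = adstarR e R X (\<chi>' u) \<longrightarrow>
           frechet_derivative \<chi>' (at u) w = adstarR e R Y (\<chi>' u) \<longrightarrow>
           (\<Sum>m\<in>UNIV. \<Sum>n\<in>UNIV. \<omega> u m n * v $ m * w $ n) = pair e (\<chi>' u) (brR R X Y)))"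

definition Lfield :: "('d::finite \<Rightarrow> complex^'n^'n) \<Rightarrow> (complex^'n^'n \<Rightarrow> complex^'m^'m) \<Rightarrow> complex^'d
    \<Rightarrow> (real^'N \<Rightarrow> complex^'m^'m) \<Rightarrow> real^'N \<Rightarrow> complex^'d" where
  "Lfield e \<rho> \<Lambda> \<phi> t = coadR e \<rho> (\<phi> t) \<Lambda>"

definition MC :: "('d::finite \<Rightarrow> complex^'n^'n) \<Rightarrow> (complex^'n^'n \<Rightarrow> complex^'m^'m)
    \<Rightarrow> (real^'N \<Rightarrow> complex^'m^'m) \<Rightarrow> 'N \<Rightarrow> real^'N \<Rightarrow> complex^'n^'n" where
  "MC e \<rho> \<phi> k t = inv_into (gset e) \<rho> (tpartial \<phi> k t ** matrix_inv (\<phi> t))"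

definition Lag :: "('d::finite \<Rightarrow> complex^'n^'n) \<Rightarrow> (complex^'n^'n \<Rightarrow> complex^'m^'m) \<Rightarrow> complex^'d
    \<Rightarrow> ('N \<Rightarrow> complex^'d \<Rightarrow> complex) \<Rightarrow> (real^'N \<Rightarrow> complex^'m^'m) \<Rightarrow> 'N \<Rightarrow> real^'N \<Rightarrow> complex" where
  "Lag e \<rho> \<Lambda> H \<phi> k t = pair e (Lfield e \<rho> \<Lambda> \<phi> t) (MC e \<rho> \<phi> k t) - H k (Lfield e \<rho> \<Lambda> \<phi> t)"

definition Upsilon :: "(complex^'c \<Rightarrow> complex^'d) \<Rightarrow> (complex^'c \<Rightarrow> 'c \<Rightarrow> 'c \<Rightarrow> complex)
    \<Rightarrow> ('N \<Rightarrow> complex^'d \<Rightarrow> complex) \<Rightarrow> (real^'N \<Rightarrow> complex^'c) \<Rightarrow> 'N \<Rightarrow> 'c \<Rightarrow> real^'N \<Rightarrow> complex" where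
  "Upsilon \<chi>' \<omega> H \<xi> k n t =
     (\<Sum>m\<in>UNIV. \<omega> (\<xi> t) m n * tpartial \<xi> k t $ m)
     - frechet_derivative (H k \<circ> \<chi>') (at (\<xi> t)) (axis n 1)"

end

theory Submission
  imports Defs
begin


type_synonym 'm cmat = "complex^'m^'m"

lemma mm_scaleR_left: "((r::real) *\<^sub>R (A::complex^'n^'m)) ** B = r *\<^sub>R (A ** B)"
  by (simp add: matrix_matrix_mult_def vec_eq_iff scaleR_sum_right)
lemma mm_scaleR_right: "(A::complex^'n^'m) ** (r *\<^sub>R B) = r *\<^sub>R (A ** B)"
  by (simp add: matrix_matrix_mult_def vec_eq_iff scaleR_sum_right)
lemma mm_add_right: "((A::'a::semiring_1^'n^'m) + B) ** C = A ** C + B ** C"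
  by (simp add: matrix_matrix_mult_def vec_eq_iff sum.distrib distrib_right)
lemma mm_add_left: "(C::'a::semiring_1^'n^'m) ** (A + B) = C ** A + C ** B"
  by (simp add: matrix_matrix_mult_def vec_eq_iff sum.distrib distrib_left)
lemma mm_diff_right: "((A::'a::ring_1^'n^'m) - B) ** C = A ** C - B ** C"
  by (simp add: matrix_matrix_mult_def vec_eq_iff sum_subtractf left_diff_distrib)
lemma mm_diff_left: "(C::'a::ring_1^'n^'m) ** (A - B) = C ** A - C ** B"
  by (simp add: matrix_matrix_mult_def vec_eq_iff sum_subtractf right_diff_distrib)
lemma mm_uminus_right: "(- (A::'a::ring_1^'n^'m)) ** C = - (A ** C)"
  by (simp add: matrix_matrix_mult_def vec_eq_iff sum_negf)
lemma mm_uminus_left: "(C::'a::ring_1^'n^'m) ** (- A) = - (C ** A)"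
  by (simp add: matrix_matrix_mult_def vec_eq_iff sum_negf)
lemma mm_zero_left[simp]: "(0::'a::semiring_1^'n^'m) ** C = 0"
  by (simp add: matrix_matrix_mult_def vec_eq_iff)
lemma mm_zero_right[simp]: "(C::'a::semiring_1^'n^'m) ** 0 = 0"
  by (simp add: matrix_matrix_mult_def vec_eq_iff)

lemma bilinear_mm: "bilinear (\<lambda>(A::complex^'n^'m) (B::complex^'p^'n). A ** B)"
  unfolding bilinear_def
  by (auto intro!: linearI simp: mm_add_left mm_add_right mm_scaleR_left mm_scaleR_right)

lemma bb_mm: "bounded_bilinear (\<lambda>(A::complex^'n^'m) (B::complex^'p^'n). A ** B)"
  using bilinear_mm bilinear_conv_bounded_bilinear by blast

lemma mm_norm_bound: "\<exists>K>0. \<forall>(A::complex^'n^'m) (B::complex^'p^'n). norm (A ** B) \<le> norm A * norm B * K"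
  using bounded_bilinear.pos_bounded[OF bb_mm] by blast

lemma inv_right: "invertible (A::'a::semiring_1^'n^'n) \<Longrightarrow> A ** matrix_inv A = mat 1"
  unfolding invertible_def matrix_inv_def by (rule someI_ex[THEN conjunct1])
lemma inv_left: "invertible (A::'a::semiring_1^'n^'n) \<Longrightarrow> matrix_inv A ** A = mat 1"
  unfolding invertible_def matrix_inv_def by (rule someI_ex[THEN conjunct2])
lemma inv_invertible: "invertible (A::'a::semiring_1^'n^'n) \<Longrightarrow> invertible (matrix_inv A)"
  using inv_left inv_right invertible_def by blast
lemma inv_unique: "(A::'a::semiring_1^'n^'n) ** B = mat 1 \<Longrightarrow> C ** A = mat 1 \<Longrightarrow> B = C"
  by (metis matrix_mul_assoc matrix_mul_lid matrix_mul_rid)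
lemma inv_inv: "invertible (A::'a::semiring_1^'n^'n) \<Longrightarrow> matrix_inv (matrix_inv A) = A"
  by (metis inv_invertible inv_left inv_right inv_unique)

lemma mat1_ne0: "mat 1 \<noteq> (0::complex^'n^'n)"
proof
  assume "mat 1 = (0::complex^'n^'n)"
  then have "(mat 1::complex^'n^'n) $ undefined $ undefined = 0" by simp
  then show False by (simp add: mat_def)
qed

lemma inv_ne0: "invertible (A::complex^'n^'n) \<Longrightarrow> matrix_inv A \<noteq> 0"
  using inv_left mat1_ne0 by fastforce

lemma inv_diff_formula:
  assumes "invertible (A::complex^'n^'n)" "invertible B"
  shows "matrix_inv B = matrix_inv A - matrix_inv A ** (B - A) ** matrix_inv B"
proof -
  have "matrix_inv A ** (B - A) ** matrix_inv B = matrix_inv A ** (B ** matrix_inv B) - (matrix_inv A ** A) ** matrix_inv B"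
    by (simp add: mm_diff_left mm_diff_right matrix_mul_assoc)
  also have "\<dots> = matrix_inv A - matrix_inv B"
    using assms by (simp add: inv_right inv_left)
  finally show ?thesis by simp
qed

lemma inv_tendsto:
  fixes f :: "'a \<Rightarrow> complex^'n^'n"
  assumes lim: "(f \<longlongrightarrow> A) F" and A: "invertible A" and ev: "eventually (\<lambda>y. invertible (f y)) F"
  shows "((\<lambda>y. matrix_inv (f y)) \<longlongrightarrow> matrix_inv A) F"
proof -
  obtain K where K: "K > 0" "\<And>(X::complex^'n^'n) (Y::complex^'n^'n). norm (X ** Y) \<le> norm X * norm Y * K"
    using mm_norm_bound by blast
  define a where "a = norm (matrix_inv A)"
  have a: "a > 0" using inv_ne0[OF A] a_def by simp
  define c where "c = 1 / (2 * K * K * a)"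
  have c: "c > 0" using K a by (simp add: c_def)
  have "((\<lambda>y. f y - A) \<longlongrightarrow> 0) F" using LIM_zero[OF lim] .
  hence limn: "((\<lambda>y. norm (f y - A)) \<longlongrightarrow> 0) F" using tendsto_norm_zero by blast
  hence evc: "eventually (\<lambda>y. norm (f y - A) < c) F" using c order_tendstoD(2) by fastforce
  have bnd: "norm (matrix_inv (f y) - matrix_inv A) \<le> (2 * K * K * a * a) * norm (f y - A)"
    if inv: "invertible (f y)" and small: "norm (f y - A) < c" for y
  proof -
    let ?B = "f y"
    have eq: "matrix_inv ?B - matrix_inv A = - (matrix_inv A ** (?B - A) ** matrix_inv ?B)"
      using inv_diff_formula[OF A inv] by (simp add: algebra_simps)
    have n1: "norm (matrix_inv A ** (?B - A) ** matrix_inv ?B) \<le> a * norm (?B - A) * norm (matrix_inv ?B) * K * K"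
    proof -
      have "norm (matrix_inv A ** (?B - A) ** matrix_inv ?B) \<le> norm (matrix_inv A ** (?B - A)) * norm (matrix_inv ?B) * K"
        by (rule K(2))
      also have "\<dots> \<le> (a * norm (?B - A) * K) * norm (matrix_inv ?B) * K"
        using K(2)[of "matrix_inv A" "?B - A"] K(1) by (simp add: a_def mult_right_mono)
      finally show ?thesis by (simp add: algebra_simps)
    qed
    have "norm (matrix_inv ?B) \<le> a + a * norm (?B - A) * norm (matrix_inv ?B) * K * K"
      using inv_diff_formula[OF A inv] n1 norm_triangle_ineq4[of "matrix_inv A" "matrix_inv A ** (?B - A) ** matrix_inv ?B"]
      by (simp add: a_def)
    moreover have "a * norm (?B - A) * K * K \<le> 1/2"
    proof -
      have "a * norm (?B - A) * K * K \<le> a * c * K * K"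
        using small a K by (simp add: mult_right_mono mult_left_mono)
      also have "\<dots> = 1/2" using a K by (simp add: c_def field_simps)
      finally show ?thesis .
    qed
    ultimately have "norm (matrix_inv ?B) \<le> a + 1/2 * norm (matrix_inv ?B)"
      by (smt (verit, ccfv_threshold) mult.commute mult.left_commute mult_right_mono norm_ge_zero)
    hence nb: "norm (matrix_inv ?B) \<le> 2 * a" by simp
    have "norm (matrix_inv ?B - matrix_inv A) \<le> a * norm (?B - A) * (2 * a) * K * K"
      using n1 eq nb a K
      by (smt (verit, best) mult_left_mono mult_nonneg_nonneg mult_right_mono norm_ge_zero norm_minus_cancel)
    thus ?thesis by (simp add: algebra_simps)
  qed
  have "((\<lambda>y. matrix_inv (f y) - matrix_inv A) \<longlongrightarrow> 0) F"
  proof (rule Lim_null_comparison)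
    show "eventually (\<lambda>y. norm (matrix_inv (f y) - matrix_inv A) \<le> (2 * K * K * a * a) * norm (f y - A)) F"
      using ev evc by eventually_elim (rule bnd)
    show "((\<lambda>y. (2 * K * K * a * a) * norm (f y - A)) \<longlongrightarrow> 0) F"
      using tendsto_mult_right_zero[OF limn] by simp
  qed
  thus ?thesis by (rule LIM_zero_cancel)
qed

lemma inv_has_derivative:
  fixes f :: "'a::real_normed_vector \<Rightarrow> complex^'n^'n"
  assumes df: "(f has_derivative f') (at x within S)" and ix: "invertible (f x)"
    and ev: "eventually (\<lambda>y. invertible (f y)) (at x within S)"
  shows "((\<lambda>y. matrix_inv (f y)) has_derivative (\<lambda>h. - (matrix_inv (f x) ** f' h ** matrix_inv (f x)))) (at x within S)"
proof -
  define Fi where "Fi = matrix_inv (f x)"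
  define g where "g y = matrix_inv (f y)" for y
  obtain K where K: "K > 0" "\<And>(X::complex^'n^'n) (Y::complex^'n^'n). norm (X ** Y) \<le> norm X * norm Y * K"
    using mm_norm_bound by blast
  have blf: "bounded_linear f'" using df has_derivative_bounded_linear by blast
  obtain B where B: "B > 0" "\<And>h. norm (f' h) \<le> norm h * B"
    using bounded_linear.pos_bounded[OF blf] by blast
  have bl: "bounded_linear (\<lambda>h. - (Fi ** f' h ** Fi))"
  proof -
    have l1: "bounded_linear (\<lambda>X::complex^'n^'n. Fi ** X)"
      by (rule bounded_bilinear.bounded_linear_right[OF bb_mm])
    have l2: "bounded_linear (\<lambda>X::complex^'n^'n. X ** Fi)"
      by (rule bounded_bilinear.bounded_linear_left[OF bb_mm])
    have "bounded_linear (\<lambda>h. Fi ** f' h)"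
      using bounded_linear_compose[OF l1 blf] .
    hence "bounded_linear (\<lambda>h. Fi ** f' h ** Fi)"
      using bounded_linear_compose[OF l2] by blast
    thus ?thesis by (rule bounded_linear_minus)
  qed
  have contf: "(f \<longlongrightarrow> f x) (at x within S)"
    using has_derivative_continuous[OF df] by (simp add: continuous_within)
  have gl: "(g \<longlongrightarrow> Fi) (at x within S)"
    unfolding g_def Fi_def by (rule inv_tendsto[OF contf ix ev])
  have gl0: "((\<lambda>y. g y - Fi) \<longlongrightarrow> 0) (at x within S)" using LIM_zero[OF gl] .
  define r where "r y = ((f y - f x) - f' (y - x)) /\<^sub>R norm (y - x)" for y
  have rl: "(r \<longlongrightarrow> 0) (at x within S)"
    using df unfolding has_derivative_at_within r_def by blast
  have t1: "((\<lambda>y. - (Fi ** r y ** g y)) \<longlongrightarrow> 0) (at x within S)"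
  proof -
    have "((\<lambda>y. Fi ** r y) \<longlongrightarrow> Fi ** 0) (at x within S)"
      by (rule bounded_bilinear.tendsto[OF bb_mm tendsto_const rl])
    hence "((\<lambda>y. Fi ** r y ** g y) \<longlongrightarrow> Fi ** 0 ** Fi) (at x within S)"
      by (rule bounded_bilinear.tendsto[OF bb_mm _ gl])
    thus ?thesis using tendsto_minus by fastforce
  qed
  have t2: "((\<lambda>y. - (Fi ** (f' (y - x) /\<^sub>R norm (y - x)) ** (g y - Fi))) \<longlongrightarrow> 0) (at x within S)"
  proof -
    have "((\<lambda>y. Fi ** (f' (y - x) /\<^sub>R norm (y - x)) ** (g y - Fi)) \<longlongrightarrow> 0) (at x within S)"
    proof (rule Lim_null_comparison)
      show "eventually (\<lambda>y. norm (Fi ** (f' (y - x) /\<^sub>R norm (y - x)) ** (g y - Fi)) \<le> (norm Fi * B * K * K) * norm (g y - Fi)) (at x within S)"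
      proof (rule always_eventually, rule allI)
        fix y
        have nb: "norm (f' (y - x) /\<^sub>R norm (y - x)) \<le> B"
        proof (cases "y = x")
          case True then show ?thesis using B by simp
        next
          case False
          then have "norm (y - x) > 0" by simp
          then show ?thesis using B(2)[of "y - x"] by (simp add: field_simps)
        qed
        have "norm (Fi ** (f' (y - x) /\<^sub>R norm (y - x)) ** (g y - Fi)) \<le> norm (Fi ** (f' (y - x) /\<^sub>R norm (y - x))) * norm (g y - Fi) * K"
          by (rule K(2))
        also have "\<dots> \<le> (norm Fi * B * K) * norm (g y - Fi) * K"
        proof -
          have "norm (Fi ** (f' (y - x) /\<^sub>R norm (y - x))) \<le> norm Fi * B * K"
            using K(2)[of Fi "f' (y - x) /\<^sub>R norm (y - x)"] nb K(1)
            by (smt (verit) mult_left_mono mult_right_mono norm_ge_zero)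
          thus ?thesis using K(1) by (simp add: mult_right_mono)
        qed
        finally show "norm (Fi ** (f' (y - x) /\<^sub>R norm (y - x)) ** (g y - Fi)) \<le> (norm Fi * B * K * K) * norm (g y - Fi)"
          by (simp add: algebra_simps)
      qed
      show "((\<lambda>y. (norm Fi * B * K * K) * norm (g y - Fi)) \<longlongrightarrow> 0) (at x within S)"
        using tendsto_mult_right_zero[OF tendsto_norm_zero[OF gl0]] by simp
    qed
    thus ?thesis using tendsto_minus by fastforce
  qed
  have eq: "eventually (\<lambda>y. ((g y - g x) - (- (Fi ** f' (y - x) ** Fi))) /\<^sub>R norm (y - x)
      = - (Fi ** r y ** g y) + - (Fi ** (f' (y - x) /\<^sub>R norm (y - x)) ** (g y - Fi))) (at x within S)"
    using ev
  proof eventually_elim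
    case (elim y)
    have gy: "g y - Fi = - (Fi ** (f y - f x) ** g y)"
      using inv_diff_formula[OF ix elim] by (simp add: g_def Fi_def algebra_simps)
    have "(g y - g x) - (- (Fi ** f' (y - x) ** Fi)) = - (Fi ** ((f y - f x) - f' (y - x)) ** g y) - Fi ** f' (y - x) ** (g y - Fi)"
      using gy by (simp add: g_def Fi_def mm_diff_left mm_diff_right mm_add_left mm_add_right matrix_mul_assoc algebra_simps)
    hence "((g y - g x) - (- (Fi ** f' (y - x) ** Fi))) /\<^sub>R norm (y - x) = (- (Fi ** ((f y - f x) - f' (y - x)) ** g y) - Fi ** f' (y - x) ** (g y - Fi)) /\<^sub>R norm (y - x)"
      by simp
    also have "\<dots> = - (Fi ** r y ** g y) + - (Fi ** (f' (y - x) /\<^sub>R norm (y - x)) ** (g y - Fi))"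
      unfolding r_def mm_scaleR_left mm_scaleR_right by (simp add: scaleR_diff_right)
    finally show ?case .
  qed
  have "((\<lambda>y. ((g y - g x) - (- (Fi ** f' (y - x) ** Fi))) /\<^sub>R norm (y - x)) \<longlongrightarrow> 0) (at x within S)"
  proof (rule Lim_transform_eventually)
    show "((\<lambda>y. - (Fi ** r y ** g y) + - (Fi ** (f' (y - x) /\<^sub>R norm (y - x)) ** (g y - Fi))) \<longlongrightarrow> 0) (at x within S)"
      using tendsto_add[OF t1 t2] by simp
    show "eventually (\<lambda>y. - (Fi ** r y ** g y) + - (Fi ** (f' (y - x) /\<^sub>R norm (y - x)) ** (g y - Fi)) = ((g y - g x) - (- (Fi ** f' (y - x) ** Fi))) /\<^sub>R norm (y - x)) (at x within S)"
      using eq by (simp add: eq_commute)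
  qed
  thus ?thesis
    unfolding has_derivative_at_within g_def[symmetric] Fi_def[symmetric] using bl by (simp add: Fi_def g_def)
qed




lemma schwarz_est:
  fixes f :: "'a::real_normed_vector \<Rightarrow> 'b::real_normed_vector"
  assumes df: "\<And>y. (f has_derivative f' y) (at y)"
    and du: "((\<lambda>y. f' y u) has_derivative Du) (at x)"
    and e: "e > 0"
  shows "\<exists>d>0. \<forall>h. \<bar>h\<bar> < d \<longrightarrow>
     norm ((f (x + h *\<^sub>R u + h *\<^sub>R v) - f (x + h *\<^sub>R u) - f (x + h *\<^sub>R v) + f x) - (h * h) *\<^sub>R Du v)
       \<le> e * (2 * norm u + norm v) * (h * h)"
proof -
  have blDu: "bounded_linear Du" using du has_derivative_bounded_linear by blast
  interpret Du: bounded_linear Du by (rule blDu)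
  obtain d where d: "d > 0" "\<And>y. norm (y - x) < d \<Longrightarrow> norm (f' y u - f' x u - Du (y - x)) \<le> e * norm (y - x)"
    using du e unfolding has_derivative_at_alt by blast
  define d' where "d' = d / (norm u + norm v + 1)"
  have npos: "norm u + norm v + 1 > 0" by (simp add: add_pos_nonneg add_nonneg_pos)
  have d': "d' > 0" using d npos by (simp add: d'_def)
  have "\<forall>h. \<bar>h\<bar> < d' \<longrightarrow>
     norm ((f (x + h *\<^sub>R u + h *\<^sub>R v) - f (x + h *\<^sub>R u) - f (x + h *\<^sub>R v) + f x) - (h * h) *\<^sub>R Du v)
       \<le> e * (2 * norm u + norm v) * (h * h)"
  proof (intro allI impI)
    fix h :: real assume h: "\<bar>h\<bar> < d'"
    define p where "p y = f' y u" for y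
    define k where "k s = f (x + s *\<^sub>R u + h *\<^sub>R v) - f (x + s *\<^sub>R u) - s *\<^sub>R (h *\<^sub>R Du v)" for s
    define w where "w s = p (x + s *\<^sub>R u + h *\<^sub>R v) - p (x + s *\<^sub>R u) - h *\<^sub>R Du v" for s
    have dk: "(k has_derivative (\<lambda>r. r *\<^sub>R w s)) (at s within closed_segment 0 h)" for s
    proof -
      have d1: "((\<lambda>s. x + s *\<^sub>R u + h *\<^sub>R v) has_derivative (\<lambda>r. r *\<^sub>R u)) (at s within closed_segment 0 h)"
        by (auto intro!: derivative_eq_intros)
      have d2: "((\<lambda>s. x + s *\<^sub>R u) has_derivative (\<lambda>r. r *\<^sub>R u)) (at s within closed_segment 0 h)"
        by (auto intro!: derivative_eq_intros)
      have c1: "((\<lambda>s. f (x + s *\<^sub>R u + h *\<^sub>R v)) has_derivative (\<lambda>r. f' (x + s *\<^sub>R u + h *\<^sub>R v) (r *\<^sub>R u))) (at s within closed_segment 0 h)"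
        using has_derivative_compose[OF d1 df] by (simp add: o_def)
      have c2: "((\<lambda>s. f (x + s *\<^sub>R u)) has_derivative (\<lambda>r. f' (x + s *\<^sub>R u) (r *\<^sub>R u))) (at s within closed_segment 0 h)"
        using has_derivative_compose[OF d2 df] by (simp add: o_def)
      have c3: "((\<lambda>s. s *\<^sub>R (h *\<^sub>R Du v)) has_derivative (\<lambda>r. r *\<^sub>R (h *\<^sub>R Du v))) (at s within closed_segment 0 h)"
        by (auto intro!: derivative_eq_intros)
      have "(k has_derivative (\<lambda>r. f' (x + s *\<^sub>R u + h *\<^sub>R v) (r *\<^sub>R u) - f' (x + s *\<^sub>R u) (r *\<^sub>R u) - r *\<^sub>R (h *\<^sub>R Du v))) (at s within closed_segment 0 h)"
        unfolding k_def by (intro has_derivative_diff c1 c2 c3)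
      moreover have "(\<lambda>r. f' (x + s *\<^sub>R u + h *\<^sub>R v) (r *\<^sub>R u) - f' (x + s *\<^sub>R u) (r *\<^sub>R u) - r *\<^sub>R (h *\<^sub>R Du v)) = (\<lambda>r. r *\<^sub>R w s)"
      proof
        fix r
        have l1: "linear (f' (x + s *\<^sub>R u + h *\<^sub>R v))" using df has_derivative_linear by blast
        have l2: "linear (f' (x + s *\<^sub>R u))" using df has_derivative_linear by blast
        show "f' (x + s *\<^sub>R u + h *\<^sub>R v) (r *\<^sub>R u) - f' (x + s *\<^sub>R u) (r *\<^sub>R u) - r *\<^sub>R (h *\<^sub>R Du v) = r *\<^sub>R w s"
          unfolding w_def p_def using linear_scale[OF l1] linear_scale[OF l2] by (simp add: scaleR_diff_right)
      qed
      ultimately show ?thesis by simp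
    qed
    have wb: "onorm (\<lambda>r. r *\<^sub>R w s) \<le> e * \<bar>h\<bar> * (2 * norm u + norm v)" if s: "s \<in> closed_segment 0 h" for s
    proof -
      have sh: "\<bar>s\<bar> \<le> \<bar>h\<bar>" using s by (auto simp: closed_segment_eq_real_ivl split: if_splits)
      have n1: "norm (s *\<^sub>R u + h *\<^sub>R v) \<le> \<bar>h\<bar> * (norm u + norm v)"
      proof -
        have "norm (s *\<^sub>R u + h *\<^sub>R v) \<le> \<bar>s\<bar> * norm u + \<bar>h\<bar> * norm v"
          using norm_triangle_ineq[of "s *\<^sub>R u" "h *\<^sub>R v"] by simp
        also have "\<dots> \<le> \<bar>h\<bar> * norm u + \<bar>h\<bar> * norm v" using sh by (simp add: mult_right_mono)
        finally show ?thesis by (simp add: algebra_simps)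
      qed
      have n2: "norm (s *\<^sub>R u) \<le> \<bar>h\<bar> * norm u" using sh by (simp add: mult_right_mono)
      have hd: "\<bar>h\<bar> * (norm u + norm v) < d"
      proof -
        have "\<bar>h\<bar> * (norm u + norm v) \<le> \<bar>h\<bar> * (norm u + norm v + 1)" by (simp add: mult_left_mono)
        also have "\<dots> < d' * (norm u + norm v + 1)"
          using h npos by (intro mult_strict_right_mono) auto
        also have "\<dots> = d" using npos by (simp add: d'_def)
        finally show ?thesis .
      qed
      have e1: "norm (p (x + s *\<^sub>R u + h *\<^sub>R v) - p x - Du (s *\<^sub>R u + h *\<^sub>R v)) \<le> e * norm (s *\<^sub>R u + h *\<^sub>R v)"
        using d(2)[of "x + s *\<^sub>R u + h *\<^sub>R v"] n1 hd unfolding p_def by (simp add: add.assoc)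
      have e2: "norm (p (x + s *\<^sub>R u) - p x - Du (s *\<^sub>R u)) \<le> e * norm (s *\<^sub>R u)"
        using d(2)[of "x + s *\<^sub>R u"] n2 hd unfolding p_def
        by (smt (verit, best) add_diff_cancel_left' mult_left_mono norm_ge_zero)
      have weq: "w s = (p (x + s *\<^sub>R u + h *\<^sub>R v) - p x - Du (s *\<^sub>R u + h *\<^sub>R v)) - (p (x + s *\<^sub>R u) - p x - Du (s *\<^sub>R u))"
        unfolding w_def by (simp add: Du.add Du.scaleR algebra_simps)
      have "norm (w s) \<le> e * norm (s *\<^sub>R u + h *\<^sub>R v) + e * norm (s *\<^sub>R u)"
        unfolding weq using e1 e2 norm_triangle_ineq4 by (smt (verit))
      also have "\<dots> \<le> e * (\<bar>h\<bar> * (norm u + norm v)) + e * (\<bar>h\<bar> * norm u)"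
        using n1 n2 e by (intro add_mono mult_left_mono) auto
      also have "\<dots> = e * \<bar>h\<bar> * (2 * norm u + norm v)" by (simp add: algebra_simps)
      finally have "norm (w s) \<le> e * \<bar>h\<bar> * (2 * norm u + norm v)" .
      moreover have "onorm (\<lambda>r. r *\<^sub>R w s) = norm (w s)"
        using onorm_scaleR_left[OF bounded_linear_ident, of "w s"] by (simp add: onorm_id)
      ultimately show ?thesis by simp
    qed
    have "norm (k h - k 0) \<le> (e * \<bar>h\<bar> * (2 * norm u + norm v)) * norm (h - 0)"
      by (rule differentiable_bound[OF convex_closed_segment dk wb]) auto
    moreover have "k h - k 0 = (f (x + h *\<^sub>R u + h *\<^sub>R v) - f (x + h *\<^sub>R u) - f (x + h *\<^sub>R v) + f x) - (h * h) *\<^sub>R Du v"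
      unfolding k_def by (simp add: algebra_simps)
    ultimately show "norm ((f (x + h *\<^sub>R u + h *\<^sub>R v) - f (x + h *\<^sub>R u) - f (x + h *\<^sub>R v) + f x) - (h * h) *\<^sub>R Du v)
       \<le> e * (2 * norm u + norm v) * (h * h)"
      by (simp add: abs_mult_self_eq algebra_simps)
  qed
  thus ?thesis using d' by blast
qed

lemma schwarz:
  fixes f :: "'a::real_normed_vector \<Rightarrow> 'b::real_normed_vector"
  assumes df: "\<And>y. (f has_derivative f' y) (at y)"
    and du: "((\<lambda>y. f' y u) has_derivative Du) (at x)"
    and dv: "((\<lambda>y. f' y v) has_derivative Dv) (at x)"
  shows "Du v = Dv u"
proof (rule ccontr)
  assume ne: "Du v \<noteq> Dv u"
  define \<delta> where "\<delta> = norm (Du v - Dv u)"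
  have \<delta>: "\<delta> > 0" using ne by (simp add: \<delta>_def)
  define C where "C = (2 * norm u + norm v) + (2 * norm v + norm u) + 1"
  have C: "C > 0" by (simp add: C_def add_pos_nonneg add_nonneg_pos)
  define e where "e = \<delta> / (2 * C)"
  have e: "e > 0" using \<delta> C by (simp add: e_def)
  obtain d1 where d1: "d1 > 0" "\<And>h. \<bar>h\<bar> < d1 \<Longrightarrow>
     norm ((f (x + h *\<^sub>R u + h *\<^sub>R v) - f (x + h *\<^sub>R u) - f (x + h *\<^sub>R v) + f x) - (h * h) *\<^sub>R Du v)
       \<le> e * (2 * norm u + norm v) * (h * h)"
    using schwarz_est[OF df du e, of v] by blast
  obtain d2 where d2: "d2 > 0" "\<And>h. \<bar>h\<bar> < d2 \<Longrightarrow>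
     norm ((f (x + h *\<^sub>R v + h *\<^sub>R u) - f (x + h *\<^sub>R v) - f (x + h *\<^sub>R u) + f x) - (h * h) *\<^sub>R Dv u)
       \<le> e * (2 * norm v + norm u) * (h * h)"
    using schwarz_est[OF df dv e, of u] by blast
  define h where "h = min d1 d2 / 2"
  have h: "h > 0" "\<bar>h\<bar> < d1" "\<bar>h\<bar> < d2" using d1 d2 by (auto simp: h_def)
  define \<Delta> where "\<Delta> = f (x + h *\<^sub>R u + h *\<^sub>R v) - f (x + h *\<^sub>R u) - f (x + h *\<^sub>R v) + f x"
  have b1: "norm (\<Delta> - (h * h) *\<^sub>R Du v) \<le> e * (2 * norm u + norm v) * (h * h)"
    using d1(2)[OF h(2)] by (simp add: \<Delta>_def)
  have b2: "norm (\<Delta> - (h * h) *\<^sub>R Dv u) \<le> e * (2 * norm v + norm u) * (h * h)"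
    using d2(2)[OF h(3)] by (simp add: \<Delta>_def algebra_simps)
  have "(\<Delta> - (h * h) *\<^sub>R Dv u) - (\<Delta> - (h * h) *\<^sub>R Du v) = (h * h) *\<^sub>R (Du v - Dv u)"
    by (simp add: scaleR_diff_right)
  hence "(h * h) * \<delta> = norm ((\<Delta> - (h * h) *\<^sub>R Dv u) - (\<Delta> - (h * h) *\<^sub>R Du v))"
    by (simp add: \<delta>_def)
  also have "\<dots> \<le> e * (2 * norm u + norm v) * (h * h) + e * (2 * norm v + norm u) * (h * h)"
    using b1 b2 norm_triangle_ineq4[of "\<Delta> - (h * h) *\<^sub>R Dv u" "\<Delta> - (h * h) *\<^sub>R Du v"] by linarith
  also have "\<dots> < e * C * (h * h)"
    using e h by (simp add: C_def algebra_simps)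
  also have "\<dots> = (h * h) * (\<delta> / 2)" using C by (simp add: e_def)
  finally have "(h * h) * \<delta> < (h * h) * (\<delta> / 2)" .
  moreover have "(h * h) * (\<delta> / 2) \<le> (h * h) * \<delta>" using h \<delta> by (intro mult_left_mono) auto
  ultimately show False by linarith
qed




lemma zero_ode:
  fixes q :: "real \<Rightarrow> 'e::real_inner"
  assumes cont: "continuous_on {0..1} q"
    and der: "\<And>s. s \<in> {0<..<1} \<Longrightarrow> (q has_derivative (\<lambda>h. h *\<^sub>R q' s)) (at s)"
    and bnd: "\<And>s. s \<in> {0<..<1} \<Longrightarrow> norm (q' s) \<le> C * norm (q s)"
    and C: "C \<ge> 0"
    and q1: "q 1 = 0"
  shows "q 0 = 0"
proof -
  define n where "n s = exp (2 * C * s) * (q s \<bullet> q s)" for s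
  have "n 0 \<le> n 1"
  proof (rule DERIV_nonneg_imp_increasing_open[of 0 1])
    fix s :: real assume s: "0 < s" "s < 1"
    have dq: "((\<lambda>s. q s \<bullet> q s) has_derivative (\<lambda>h. q s \<bullet> (h *\<^sub>R q' s) + (h *\<^sub>R q' s) \<bullet> q s)) (at s)"
      using has_derivative_inner[OF der der] s by simp
    have dq': "((\<lambda>s. q s \<bullet> q s) has_real_derivative (2 * (q s \<bullet> q' s))) (at s)"
      unfolding has_field_derivative_def
      using dq by (simp add: inner_commute algebra_simps) (metis (no_types, lifting) ext mult.commute)
    have dn: "(n has_real_derivative (exp (2 * C * s) * (2 * C) * (q s \<bullet> q s) + exp (2 * C * s) * (2 * (q s \<bullet> q' s)))) (at s)"
      unfolding n_def
      by (auto intro!: derivative_eq_intros dq')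
    have "\<bar>q s \<bullet> q' s\<bar> \<le> norm (q s) * norm (q' s)" by (rule Cauchy_Schwarz_ineq2)
    also have "\<dots> \<le> norm (q s) * (C * norm (q s))" using bnd[of s] s by (simp add: mult_left_mono)
    also have "\<dots> = C * (q s \<bullet> q s)" by (simp add: power2_norm_eq_inner[symmetric] power2_eq_square)
    finally have "0 \<le> C * (q s \<bullet> q s) + q s \<bullet> q' s" by linarith
    hence "0 \<le> exp (2 * C * s) * (2 * C) * (q s \<bullet> q s) + exp (2 * C * s) * (2 * (q s \<bullet> q' s))"
    proof -
      assume h: "0 \<le> C * (q s \<bullet> q s) + q s \<bullet> q' s"
      have "exp (2 * C * s) * (2 * C) * (q s \<bullet> q s) + exp (2 * C * s) * (2 * (q s \<bullet> q' s)) = 2 * exp (2 * C * s) * (C * (q s \<bullet> q s) + q s \<bullet> q' s)"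
        by (simp add: algebra_simps)
      thus ?thesis using h by simp
    qed
    thus "\<exists>y. (n has_real_derivative y) (at s) \<and> 0 \<le> y" using dn by blast
  next
    show "continuous_on {0..1} n" unfolding n_def
      by (intro continuous_intros cont)
  qed simp
  hence "q 0 \<bullet> q 0 \<le> 0" by (simp add: n_def q1)
  thus ?thesis by (metis inner_eq_zero_iff inner_ge_zero order_antisym)
qed

lemma inv_mat1: "matrix_inv (mat 1 :: 'a::semiring_1^'n^'n) = mat 1"
proof -
  have i: "invertible (mat 1 :: 'a^'n^'n)" unfolding invertible_def by (rule exI[of _ "mat 1"]) simp
  show ?thesis using inv_unique[OF inv_right[OF i], of "mat 1"] by simp
qed

lemma ad_invariance:
  fixes \<gamma> \<gamma>' :: "real \<Rightarrow> complex^'m^'m" and P :: "complex^'m^'m \<Rightarrow> complex^'m^'m"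
  assumes Plin: "linear P" and Pker: "\<And>X. P X = 0 \<longleftrightarrow> X \<in> V" and Pproj: "\<And>X. X - P X \<in> V"
    and Vcomm: "\<And>X Y. X \<in> V \<Longrightarrow> Y \<in> V \<Longrightarrow> X ** Y - Y ** X \<in> V"
    and g0: "\<gamma> 0 = mat 1" and g'c: "continuous_on {0..1} \<gamma>'"
    and gd: "\<And>s. s \<in> {0..1} \<Longrightarrow> (\<gamma> has_vector_derivative \<gamma>' s) (at s within {0..1})"
    and gi: "\<And>s. s \<in> {0..1} \<Longrightarrow> invertible (\<gamma> s)"
    and gM: "\<And>s. s \<in> {0..1} \<Longrightarrow> \<gamma>' s ** matrix_inv (\<gamma> s) \<in> V"
    and Y: "Y \<in> V"
  shows "matrix_inv (\<gamma> 1) ** Y ** \<gamma> 1 \<in> V"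
proof -
  define Gi where "Gi s = matrix_inv (\<gamma> s)" for s
  define B where "B = Gi 1 ** Y ** \<gamma> 1"
  define Q where "Q s = \<gamma> s ** B ** Gi s" for s
  define M where "M s = \<gamma>' s ** Gi s" for s
  have blP: "bounded_linear P" using Plin linear_conv_bounded_linear by blast
  have dG: "(Gi has_derivative (\<lambda>h. - (Gi s ** (h *\<^sub>R \<gamma>' s) ** Gi s))) (at s within {0..1})"
    if s: "s \<in> {0..1}" for s
  proof -
    have ev: "eventually (\<lambda>y. invertible (\<gamma> y)) (at s within {0..1})"
      by (auto simp: eventually_at_filter gi intro: always_eventually)
    show ?thesis unfolding Gi_def
      using inv_has_derivative[OF gd[OF s, unfolded has_vector_derivative_def] gi[OF s] ev] .
  qed
  have dQ: "(Q has_derivative (\<lambda>h. h *\<^sub>R (M s ** Q s - Q s ** M s))) (at s within {0..1})"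
    if s: "s \<in> {0..1}" for s
  proof -
    have d1: "((\<lambda>s. \<gamma> s ** B) has_derivative (\<lambda>h. \<gamma> s ** 0 + (h *\<^sub>R \<gamma>' s) ** B)) (at s within {0..1})"
      by (rule bounded_bilinear.FDERIV[OF bb_mm gd[OF s, unfolded has_vector_derivative_def] has_derivative_const])
    have d2: "(Q has_derivative (\<lambda>h. (\<gamma> s ** B) ** (- (Gi s ** (h *\<^sub>R \<gamma>' s) ** Gi s)) + (\<gamma> s ** 0 + (h *\<^sub>R \<gamma>' s) ** B) ** Gi s)) (at s within {0..1})"
      unfolding Q_def by (rule bounded_bilinear.FDERIV[OF bb_mm d1 dG[OF s]])
    have gig: "Gi s ** \<gamma> s = mat 1" unfolding Gi_def using inv_left[OF gi[OF s]] .
    have "(\<lambda>h. (\<gamma> s ** B) ** (- (Gi s ** (h *\<^sub>R \<gamma>' s) ** Gi s)) + (\<gamma> s ** 0 + (h *\<^sub>R \<gamma>' s) ** B) ** Gi s)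
        = (\<lambda>h. h *\<^sub>R (M s ** Q s - Q s ** M s))"
    proof
      fix h
      have "M s ** Q s = \<gamma>' s ** (Gi s ** \<gamma> s) ** B ** Gi s" unfolding M_def Q_def by (simp add: matrix_mul_assoc)
      also have "\<dots> = \<gamma>' s ** B ** Gi s" using gig by simp
      finally have mq: "M s ** Q s = \<gamma>' s ** B ** Gi s" .
      show "(\<gamma> s ** B) ** (- (Gi s ** (h *\<^sub>R \<gamma>' s) ** Gi s)) + (\<gamma> s ** 0 + (h *\<^sub>R \<gamma>' s) ** B) ** Gi s = h *\<^sub>R (M s ** Q s - Q s ** M s)"
        unfolding mq by (simp add: Q_def M_def mm_uminus_left mm_scaleR_left mm_scaleR_right matrix_mul_assoc scaleR_diff_right)
    qed
    with d2 show ?thesis by simp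
  qed
  have Qc: "continuous_on {0..1} Q"
    using dQ has_derivative_continuous continuous_on_eq_continuous_within by blast
  have qc: "continuous_on {0..1} (\<lambda>s. P (Q s))"
    using continuous_on_compose2[OF linear_continuous_on[OF blP] Qc] by auto
  have dq: "((\<lambda>s. P (Q s)) has_derivative (\<lambda>h. h *\<^sub>R P (M s ** Q s - Q s ** M s))) (at s)"
    if s: "s \<in> {0<..<1}" for s
  proof -
    have "(Q has_derivative (\<lambda>h. h *\<^sub>R (M s ** Q s - Q s ** M s))) (at s)"
      using dQ[of s] s at_within_interior[of s "{0..1::real}"] by auto
    from has_derivative_compose[OF this bounded_linear.has_derivative[OF blP has_derivative_ident]]
    show ?thesis by (simp add: o_def linear_scale[OF Plin])
  qed
  have Gc: "continuous_on {0..1} Gi"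
    using dG has_derivative_continuous continuous_on_eq_continuous_within by blast
  have Mc: "continuous_on {0..1} M"
    unfolding M_def by (rule bounded_bilinear.continuous_on[OF bb_mm g'c Gc])
  obtain Mb where Mb: "\<And>s. s \<in> {0..1} \<Longrightarrow> norm (M s) \<le> Mb"
    using compact_imp_bounded[OF compact_continuous_image[OF Mc compact_Icc]] unfolding bounded_iff by (meson imageI)
  have Mb0: "Mb \<ge> 0" using Mb[of 0] norm_ge_zero[of "M 0"] by (simp del: norm_ge_zero)
  obtain K where K: "K > 0" "\<And>(X::complex^'m^'m) (Y::complex^'m^'m). norm (X ** Y) \<le> norm X * norm Y * K"
    using mm_norm_bound by blast
  obtain Bp where Bp: "Bp > 0" "\<And>X. norm (P X) \<le> norm X * Bp"
    using bounded_linear.pos_bounded[OF blP] by blast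
  have bnd: "norm (P (M s ** Q s - Q s ** M s)) \<le> (Bp * 2 * K * Mb) * norm (P (Q s))"
    if s: "s \<in> {0<..<1}" for s
  proof -
    have s': "s \<in> {0..1}" using s by auto
    define W where "W = Q s - P (Q s)"
    have WV: "W \<in> V" unfolding W_def by (rule Pproj)
    have MV: "M s \<in> V" unfolding M_def Gi_def by (rule gM[OF s'])
    have split: "M s ** Q s - Q s ** M s = (M s ** W - W ** M s) + (M s ** P (Q s) - P (Q s) ** M s)"
      unfolding W_def by (simp add: mm_diff_left mm_diff_right algebra_simps)
    have "P (M s ** Q s - Q s ** M s) = P (M s ** P (Q s) - P (Q s) ** M s)"
      unfolding split linear_add[OF Plin] using Pker Vcomm[OF MV WV] by simp
    also have "norm \<dots> \<le> norm (M s ** P (Q s) - P (Q s) ** M s) * Bp" by (rule Bp(2))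
    also have "\<dots> \<le> (2 * K * Mb * norm (P (Q s))) * Bp"
    proof (rule mult_right_mono)
      have "norm (M s ** P (Q s) - P (Q s) ** M s) \<le> norm (M s ** P (Q s)) + norm (P (Q s) ** M s)"
        by (rule norm_triangle_ineq4)
      also have "\<dots> \<le> norm (M s) * norm (P (Q s)) * K + norm (P (Q s)) * norm (M s) * K"
        by (rule add_mono[OF K(2) K(2)])
      also have "\<dots> = 2 * K * norm (M s) * norm (P (Q s))" by (simp add: algebra_simps)
      also have "\<dots> \<le> 2 * K * Mb * norm (P (Q s))"
        using Mb[OF s'] K(1) by (intro mult_right_mono mult_left_mono) auto
      finally show "norm (M s ** P (Q s) - P (Q s) ** M s) \<le> 2 * K * Mb * norm (P (Q s))" .
    qed (use Bp in auto)
    finally show ?thesis by (simp add: algebra_simps)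
  qed
  have q1: "P (Q 1) = 0"
  proof -
    have gi1: "\<gamma> 1 ** Gi 1 = mat 1" unfolding Gi_def using inv_right[OF gi[of 1]] by simp
    have "Q 1 = (\<gamma> 1 ** Gi 1) ** Y ** (\<gamma> 1 ** Gi 1)" unfolding Q_def B_def by (simp add: matrix_mul_assoc)
    thus ?thesis using gi1 Pker Y by simp
  qed
  have "P (Q 0) = 0"
    by (rule zero_ode[where q = "\<lambda>s. P (Q s)", OF qc dq bnd _ q1]) (use Bp K Mb0 in auto)
  moreover have "Q 0 = B" unfolding Q_def Gi_def g0 inv_mat1 by simp
  ultimately show ?thesis using Pker B_def Gi_def by simp
qed




lemma msc_add_right: "msc c (X + Y) = msc c X + msc c Y"
  by (simp add: msc_def vec_eq_iff distrib_left)
lemma msc_add_left: "msc (c + d) X = msc c X + msc d X"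
  by (simp add: msc_def vec_eq_iff distrib_right)
lemma msc_diff_right: "msc c (X - Y) = msc c X - msc c Y"
  by (simp add: msc_def vec_eq_iff right_diff_distrib)
lemma msc_minus_right: "msc c (- X) = - msc c X"
  by (simp add: msc_def vec_eq_iff)
lemma msc_mult: "msc c (msc d X) = msc (c * d) X"
  by (simp add: msc_def vec_eq_iff mult.assoc)
lemma msc_one[simp]: "msc 1 X = X"
  by (simp add: msc_def vec_eq_iff)
lemma msc_zero[simp]: "msc 0 X = 0"
  by (simp add: msc_def vec_eq_iff)
lemma msc_zero_right[simp]: "msc c 0 = 0"
  by (simp add: msc_def vec_eq_iff)
lemma msc_sum: "msc c (\<Sum>i\<in>A. f i) = (\<Sum>i\<in>A. msc c (f i))"
  by (induction A rule: infinite_finite_induct) (auto simp: msc_add_right)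
lemma msc_mm_left: "msc c A ** B = msc c (A ** B)"
  by (simp add: msc_def vec_eq_iff matrix_matrix_mult_def sum_distrib_left mult.assoc)
lemma msc_mm_right: "A ** msc c B = msc c (A ** B)"
  by (simp add: msc_def vec_eq_iff matrix_matrix_mult_def sum_distrib_left mult.left_commute)
lemma msc_of_real: "msc (of_real r) A = r *\<^sub>R A"
proof -
  have "\<And>z::complex. r *\<^sub>R z = of_real r * z" by (simp add: scaleR_conv_of_real)
  thus ?thesis by (simp add: msc_def vec_eq_iff)
qed
lemma comm_msc_left: "comm (msc c X) Y = msc c (comm X Y)"
  by (simp add: comm_def msc_mm_left msc_mm_right msc_diff_right)

lemma lincomb_add: "lincomb e (c + d) = lincomb e c + lincomb e d"
  by (simp add: lincomb_def msc_add_left sum.distrib)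
lemma lincomb_smult: "lincomb e (z *s c) = msc z (lincomb e c)"
  by (simp add: lincomb_def msc_sum msc_mult)
lemma lincomb_zero: "lincomb e 0 = 0"
  by (simp add: lincomb_def)
lemma lincomb_minus: "lincomb e (- c) = - lincomb e c"
  using lincomb_smult[of e "-1" c] by (simp add: msc_def vec_eq_iff)
lemma lincomb_diff: "lincomb e (c - d) = lincomb e c - lincomb e d"
  using lincomb_add[of e c "- d"] lincomb_minus[of e d] by simp
lemma lincomb_axis: "lincomb e (axis a 1) = e a"
proof -
  have "lincomb e (axis a 1) = (\<Sum>b\<in>UNIV. if b = a then e b else 0)"
    unfolding lincomb_def by (intro sum.cong) (auto simp: axis_def)
  thus ?thesis by simp
qed

lemma vec_expand: "(c::'a::comm_ring_1^'d::finite) = (\<Sum>a\<in>UNIV. c $ a *s axis a 1)"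
proof -
  have "\<And>i. (\<Sum>a\<in>UNIV. c $ a * (if i = a then 1 else 0)) = c $ i"
    by (simp add: if_distrib[of "\<lambda>x. _ * x"] cong: if_cong)
  thus ?thesis by (simp add: vec_eq_iff sum_component axis_def)
qed

lemma lin_expand_scalar:
  fixes f :: "'a::comm_ring_1^'d::finite \<Rightarrow> 'a"
  assumes add: "\<And>x y. f (x + y) = f x + f y" and sc: "\<And>z x. f (z *s x) = z * f x"
  shows "f c = (\<Sum>a\<in>UNIV. c $ a * f (axis a 1))"
proof -
  interpret additive f by standard (rule add)
  have "f c = f (\<Sum>a\<in>UNIV. c $ a *s axis a 1)" using vec_expand[of c] by simp
  also have "\<dots> = (\<Sum>a\<in>UNIV. f (c $ a *s axis a 1))" by (rule sum)
  finally show ?thesis by (simp add: sc)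
qed

lemma lin_expand_vec:
  fixes f :: "'a::comm_ring_1^'d::finite \<Rightarrow> 'a^'e"
  assumes add: "\<And>x y. f (x + y) = f x + f y" and sc: "\<And>z x. f (z *s x) = z *s f x"
  shows "f c = (\<Sum>a\<in>UNIV. c $ a *s f (axis a 1))"
proof -
  interpret additive f by standard (rule add)
  have "f c = f (\<Sum>a\<in>UNIV. c $ a *s axis a 1)" using vec_expand[of c] by simp
  also have "\<dots> = (\<Sum>a\<in>UNIV. f (c $ a *s axis a 1))" by (rule sum)
  finally show ?thesis by (simp add: sc)
qed

definition dotc :: "'a::comm_ring_1^'d::finite \<Rightarrow> 'a^'d \<Rightarrow> 'a" where
  "dotc x y = (\<Sum>a\<in>UNIV. x $ a * y $ a)"

lemma dotc_add_right: "dotc x (y + z) = dotc x y + dotc x z"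
  by (simp add: dotc_def distrib_left sum.distrib)
lemma dotc_add_left: "dotc (x + y) z = dotc x z + dotc y z"
  by (simp add: dotc_def distrib_right sum.distrib)
lemma dotc_scale_right: "dotc x (c *s y) = c * dotc x y"
  by (simp add: dotc_def sum_distrib_left mult.left_commute)
lemma dotc_scale_left: "dotc (c *s x) y = c * dotc x y"
  by (simp add: dotc_def sum_distrib_left mult.assoc)
lemma dotc_minus_right: "dotc x (- y) = - dotc x y"
  by (simp add: dotc_def sum_negf)
lemma dotc_diff_right: "dotc x (y - z) = dotc x y - dotc x z"
  by (simp add: dotc_def right_diff_distrib sum_subtractf)
lemma dotc_comm: "dotc x y = dotc y x"
  by (simp add: dotc_def mult.commute)
lemma dotc_axis: "dotc x (axis a 1) = x $ a"
proof -
  have "dotc x (axis a 1) = (\<Sum>b\<in>UNIV. if b = a then x $ b else 0)"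
    unfolding dotc_def by (intro sum.cong) (auto simp: axis_def)
  thus ?thesis by simp
qed


section \<open>The Lie algebra setup\<close>

locale lie_setup =
  fixes e :: "'d::finite \<Rightarrow> complex^'n^'n"
    and R :: "complex^'n^'n \<Rightarrow> complex^'n^'n"
    and \<rho> :: "complex^'n^'n \<Rightarrow> complex^'m^'m"
  assumes g: "matrix_lie_algebra_basis e"
    and Rm: "mCYBE e R"
    and rep: "faithful_rep e R \<rho>"
begin

lemma lincomb_inj: "lincomb e c = lincomb e d \<Longrightarrow> c = d"
proof -
  assume "lincomb e c = lincomb e d"
  hence "lincomb e (c - d) = 0" by (simp add: lincomb_diff)
  hence "c - d = 0" using g[unfolded matrix_lie_algebra_basis_def, THEN conjunct1] by blast
  thus "c = d" by simp
qed

lemma coords_lincomb[simp]: "coords e (lincomb e c) = c"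
  unfolding coords_def by (rule the_equality) (auto dest: lincomb_inj)

lemma lincomb_coords: "X \<in> gset e \<Longrightarrow> lincomb e (coords e X) = X"
  unfolding gset_def by auto

lemma gset_lincomb[simp]: "lincomb e c \<in> gset e"
  unfolding gset_def by simp

lemma gset_add: "X \<in> gset e \<Longrightarrow> Y \<in> gset e \<Longrightarrow> X + Y \<in> gset e"
  unfolding gset_def by (auto simp: lincomb_add[symmetric])
lemma gset_msc: "X \<in> gset e \<Longrightarrow> msc c X \<in> gset e"
  unfolding gset_def by (auto simp: lincomb_smult[symmetric])
lemma gset_comm: "X \<in> gset e \<Longrightarrow> Y \<in> gset e \<Longrightarrow> comm X Y \<in> gset e"
  using g[unfolded matrix_lie_algebra_basis_def, THEN conjunct2] by blast
lemma gset_R: "X \<in> gset e \<Longrightarrow> R X \<in> gset e"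
  using Rm[unfolded mCYBE_def, THEN conjunct1] by blast
lemma gset_brR: "X \<in> gset e \<Longrightarrow> Y \<in> gset e \<Longrightarrow> brR R X Y \<in> gset e"
  unfolding brR_def by (intro gset_msc gset_add gset_comm gset_R)

lemma rep_parts1: "inj_on \<rho> (gset e)"
  using rep[unfolded faithful_rep_def, THEN conjunct1] .
lemma rep_parts2: "\<forall>X\<in>gset e. \<forall>Y\<in>gset e. \<rho> (X + Y) = \<rho> X + \<rho> Y"
  using rep[unfolded faithful_rep_def, THEN conjunct2, THEN conjunct1] .
lemma rep_parts3: "\<forall>X\<in>gset e. \<forall>c. \<rho> (msc c X) = (\<chi> i j. c * \<rho> X $ i $ j)"
  using rep[unfolded faithful_rep_def, THEN conjunct2, THEN conjunct2, THEN conjunct1] .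
lemma rep_parts4: "\<forall>X\<in>gset e. \<forall>Y\<in>gset e. \<rho> (brR R X Y) = \<rho> X ** \<rho> Y - \<rho> Y ** \<rho> X"
  using rep[unfolded faithful_rep_def, THEN conjunct2, THEN conjunct2, THEN conjunct2] .
lemma rho_add: "X \<in> gset e \<Longrightarrow> Y \<in> gset e \<Longrightarrow> \<rho> (X + Y) = \<rho> X + \<rho> Y"
  using rep_parts2 by blast
lemma rho_msc: "X \<in> gset e \<Longrightarrow> \<rho> (msc c X) = msc c (\<rho> X)"
  using rep_parts3 unfolding msc_def by blast
lemma rho_br: "X \<in> gset e \<Longrightarrow> Y \<in> gset e \<Longrightarrow> \<rho> (brR R X Y) = \<rho> X ** \<rho> Y - \<rho> Y ** \<rho> X"
  using rep_parts4 by blast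
lemma rho_inj: "inj_on \<rho> (gset e)"
  by (rule rep_parts1)

definition T :: "complex^'d \<Rightarrow> complex^'m^'m" where
  "T c = \<rho> (lincomb e c)"

definition br :: "complex^'d \<Rightarrow> complex^'d \<Rightarrow> complex^'d" where
  "br c d = coords e (brR R (lincomb e c) (lincomb e d))"

lemma T_add: "T (c + d) = T c + T d"
  unfolding T_def lincomb_add by (rule rho_add) auto
lemma T_smult: "T (z *s c) = msc z (T c)"
  unfolding T_def lincomb_smult by (rule rho_msc) auto
lemma T_inj: "T c = T d \<Longrightarrow> c = d"
proof -
  assume "T c = T d"
  hence "lincomb e c = lincomb e d" unfolding T_def using rho_inj inj_onD gset_lincomb by metis
  thus "c = d" by (rule lincomb_inj)
qed
lemma T_linear: "linear T"
proof (rule linearI)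
  show "T (x + y) = T x + T y" for x y by (rule T_add)
  show "T (r *\<^sub>R x) = r *\<^sub>R T x" for r x
  proof -
    have "\<And>z::complex. r *\<^sub>R z = of_real r * z" by (simp add: scaleR_conv_of_real)
    hence "r *\<^sub>R x = (of_real r :: complex) *s x" by (simp add: vec_eq_iff)
    thus ?thesis using T_smult msc_of_real by simp
  qed
qed
lemma T_zero: "T 0 = 0" using linear_0[OF T_linear] .
lemma T_diff: "T (c - d) = T c - T d" using linear_diff[OF T_linear] .
lemma T_minus: "T (- c) = - T c" using linear_neg[OF T_linear] .

lemma T_br: "T (br c d) = T c ** T d - T d ** T c"
  unfolding br_def T_def
  by (simp add: lincomb_coords gset_brR rho_br)

lemma br_add_left: "br (c + c') d = br c d + br c' d"
  by (rule T_inj) (simp add: T_br T_add mm_add_right mm_add_left)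
lemma br_add_right: "br d (c + c') = br d c + br d c'"
  by (rule T_inj) (simp add: T_br T_add mm_add_right mm_add_left)
lemma br_smult_left: "br (z *s c) d = z *s br c d"
  by (rule T_inj) (simp add: T_br T_smult msc_mm_left msc_mm_right msc_diff_right)
lemma br_smult_right: "br d (z *s c) = z *s br d c"
  by (rule T_inj) (simp add: T_br T_smult msc_mm_left msc_mm_right msc_diff_right)
lemma br_anti: "br c d = - br d c"
  by (rule T_inj) (simp add: T_br T_minus)
lemma br_diff_left: "br (c - c') d = br c d - br c' d"
  by (rule T_inj) (simp add: T_br T_diff mm_diff_right mm_diff_left)

lemma br_expand_left: "dotc x (br c d) = (\<Sum>a\<in>UNIV. c $ a * dotc x (br (axis a 1) d))"
  by (rule lin_expand_scalar[of "\<lambda>c. dotc x (br c d)"])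
     (simp_all add: br_add_left br_smult_left dotc_add_right dotc_scale_right)

lemma pair_eq: "pair e \<xi> X = dotc \<xi> (coords e X)"
  by (simp add: pair_def dotc_def)

lemma inv_into_T: "inv_into (gset e) \<rho> (T c) = lincomb e c"
  unfolding T_def by (rule inv_into_f_f[OF rho_inj gset_lincomb])

lemma coords_brR: "coords e (brR R (lincomb e c) (lincomb e d)) = br c d"
  by (simp add: br_def)

lemma adstar_eq: "adstarR e R (lincomb e c) \<xi> = (\<chi> a. dotc \<xi> (br (axis a 1) c))"
  by (simp add: adstarR_def pair_eq br_def lincomb_axis)

lemma T_range: "range T = \<rho> ` gset e"
  unfolding T_def gset_def by auto

lemma V_comm: "X \<in> range T \<Longrightarrow> Y \<in> range T \<Longrightarrow> X ** Y - Y ** X \<in> range T"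
proof -
  assume "X \<in> range T" "Y \<in> range T"
  then obtain c d where "X = T c" "Y = T d" by blast
  thus ?thesis using T_br[of c d] by (metis rangeI)
qed

end




context lie_setup begin

definition kap :: "complex^'m^'m \<Rightarrow> complex^'d" where
  "kap = (SOME g. linear g \<and> g \<circ> T = id)"

lemma T_inj': "inj T" using T_inj by (meson injI)

lemma kap_props: "linear kap \<and> kap \<circ> T = id"
proof -
  have "\<exists>g. linear g \<and> g \<circ> T = id" by (rule linear_injective_left_inverse[OF T_linear T_inj'])
  thus ?thesis unfolding kap_def by (rule someI_ex)
qed

lemma kap_linear: "linear kap" using kap_props by blast
lemma kap_T[simp]: "kap (T c) = c" using kap_props by (metis comp_apply id_apply)
lemma T_kap: "X \<in> range T \<Longrightarrow> T (kap X) = X" by auto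

definition Pc :: "complex^'m^'m \<Rightarrow> complex^'m^'m" where
  "Pc X = X - T (kap X)"

lemma Pc_linear: "linear Pc"
  unfolding Pc_def by (intro linear_compose_sub linear_ident linear_compose[OF kap_linear T_linear, unfolded o_def])

lemma Pc_ker: "Pc X = 0 \<longleftrightarrow> X \<in> range T"
  unfolding Pc_def by (metis T_kap eq_iff_diff_eq_0 rangeI)

lemma Pc_proj: "X - Pc X \<in> range T"
  unfolding Pc_def by simp

lemma GR_ad:
  assumes A: "A \<in> GR e \<rho>"
  shows "invertible A" "matrix_inv A ** T c ** A \<in> range T"
proof -
  obtain \<gamma> \<gamma>' where g: "\<gamma> 0 = mat 1" "\<gamma> 1 = A" "continuous_on {0..1::real} \<gamma>'"
    "\<forall>s\<in>{0..1}. (\<gamma> has_vector_derivative \<gamma>' s) (at s within {0..1}) \<and>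
          invertible (\<gamma> s) \<and> \<gamma>' s ** matrix_inv (\<gamma> s) \<in> \<rho> ` gset e"
    using A unfolding GR_def by blast
  show "invertible A" using g(2,4) by force
  show "matrix_inv A ** T c ** A \<in> range T"
  proof -
    have "matrix_inv (\<gamma> 1) ** T c ** \<gamma> 1 \<in> range T"
    proof (rule ad_invariance[where P = Pc and V = "range T" and \<gamma>' = \<gamma>'])
      show "linear Pc" by (rule Pc_linear)
      show "(Pc X = 0) = (X \<in> range T)" for X by (rule Pc_ker)
      show "X - Pc X \<in> range T" for X by (rule Pc_proj)
      show "X ** Y - Y ** X \<in> range T" if "X \<in> range T" "Y \<in> range T" for X Y using V_comm that .
      show "\<gamma> 0 = mat 1" by (rule g(1))
      show "continuous_on {0..1} \<gamma>'" by (rule g(3))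
      show "(\<gamma> has_vector_derivative \<gamma>' s) (at s within {0..1})" if "s \<in> {0..1}" for s using g(4) that by blast
      show "invertible (\<gamma> s)" if "s \<in> {0..1}" for s using g(4) that by blast
      show "\<gamma>' s ** matrix_inv (\<gamma> s) \<in> range T" if "s \<in> {0..1}" for s using g(4) that T_range by blast
      show "T c \<in> range T" by simp
    qed
    thus ?thesis using g(2) by simp
  qed
qed

end


lemma dd_single: "dd [v] f = (\<lambda>x. frechet_derivative f (at x) v)" by simp

lemma smooth_diff: "smooth_on S f \<Longrightarrow> x \<in> S \<Longrightarrow> f differentiable (at x)"
  unfolding smooth_on_def using dd.simps(1) by metis

lemma smooth_tpartial_diff: "smooth_on S f \<Longrightarrow> x \<in> S \<Longrightarrow> tpartial f k differentiable (at x)"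
proof -
  assume "smooth_on S f" "x \<in> S"
  hence "dd [axis k 1] f differentiable (at x)" unfolding smooth_on_def by blast
  moreover have "dd [axis k 1] f = tpartial f k" by (simp add: tpartial_def fun_eq_iff)
  ultimately show ?thesis by simp
qed

lemma linear_has_derivative_comp:
  fixes g :: "'a::euclidean_space \<Rightarrow> 'b::real_normed_vector"
  assumes "linear g" "(F has_derivative F') net"
  shows "((\<lambda>x. g (F x)) has_derivative (\<lambda>h. g (F' h))) net"
  using bounded_linear.has_derivative[OF linear_conv_bounded_linear[THEN iffD1, OF assms(1)] assms(2)] .

lemma bilinear_dotc: "bilinear (dotc :: complex^'d::finite \<Rightarrow> complex^'d \<Rightarrow> complex)"
proof -
  have sc: "\<And>z::complex. r *\<^sub>R z = of_real r * z" for r by (simp add: scaleR_conv_of_real)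
  have sv: "r *\<^sub>R (x::complex^'d) = (of_real r :: complex) *s x" for r x using sc by (simp add: vec_eq_iff)
  show ?thesis unfolding bilinear_def
    by (auto intro!: linearI simp: dotc_add_left dotc_add_right sv dotc_scale_left dotc_scale_right sc)
qed

lemma bb_dotc: "bounded_bilinear (dotc :: complex^'d::finite \<Rightarrow> complex^'d \<Rightarrow> complex)"
  using bilinear_dotc bilinear_conv_bounded_bilinear by blast

lemma linear_dotc_right: "linear (\<lambda>y. dotc (x::complex^'d::finite) y)"
  using bilinear_dotc unfolding bilinear_def by blast
lemma linear_dotc_left: "linear (\<lambda>x. dotc (x::complex^'d::finite) y)"
  using bilinear_dotc unfolding bilinear_def by blast

locale main_setup = lie_setup e R \<rho>
  for e :: "'d::finite \<Rightarrow> complex^'n^'n"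
    and R :: "complex^'n^'n \<Rightarrow> complex^'n^'n"
    and \<rho> :: "complex^'n^'n \<Rightarrow> complex^'m^'m" +
  fixes \<Lambda> :: "complex^'d"
    and H :: "'N::finite \<Rightarrow> complex^'d \<Rightarrow> complex"
    and \<phi> :: "real^'N \<Rightarrow> complex^'m^'m"
    and U :: "(complex^'c) set"
    and \<chi>' :: "complex^'c \<Rightarrow> complex^'d"
    and \<omega> :: "complex^'c \<Rightarrow> 'c \<Rightarrow> 'c \<Rightarrow> complex"
    and \<xi> :: "real^'N \<Rightarrow> complex^'c"
  assumes H: "\<And>k. holo_scalar_on UNIV (H k)"
    and phi_smooth: "smooth_on UNIV \<phi>"
    and phi_GR: "\<And>t. \<phi> t \<in> GR e \<rho>"
    and phi_MC: "\<And>t k. tpartial \<phi> k t ** matrix_inv (\<phi> t) \<in> \<rho> ` gset e"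
    and chart: "orbit_chart e R \<rho> \<Lambda> U \<chi>'"
    and KKS: "KKS_coeffs e R U \<chi>' \<omega>"
    and xi_smooth: "smooth_on UNIV \<xi>"
    and xi_U: "\<And>t. \<xi> t \<in> U"
    and xi_L: "\<And>t. \<chi>' (\<xi> t) = Lfield e \<rho> \<Lambda> \<phi> t"
    and EL: "\<And>k n t. Upsilon \<chi>' \<omega> H \<xi> k n t = 0"
begin

definition "psi t = matrix_inv (\<phi> t)"
definition "L t = Lfield e \<rho> \<Lambda> \<phi> t"
definition "Ad t c = kap (psi t ** T c ** \<phi> t)"
definition "Z k t = tpartial \<phi> k t ** psi t"
definition "mk k t = kap (Z k t)"

lemma phi_inv: "invertible (\<phi> t)" using GR_ad(1)[OF phi_GR] .

lemma psi_phi: "psi t ** \<phi> t = mat 1" unfolding psi_def using inv_left[OF phi_inv] .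
lemma phi_psi: "\<phi> t ** psi t = mat 1" unfolding psi_def using inv_right[OF phi_inv] .

lemma T_Ad: "T (Ad t c) = psi t ** T c ** \<phi> t"
  unfolding Ad_def psi_def by (rule T_kap[OF GR_ad(2)[OF phi_GR]])

lemma Ad_add: "Ad t (c + d) = Ad t c + Ad t d"
  by (rule T_inj) (simp add: T_Ad T_add mm_add_left mm_add_right)

lemma Ad_smult: "Ad t (z *s c) = z *s Ad t c"
  by (rule T_inj) (simp add: T_Ad T_smult msc_mm_left msc_mm_right)

lemma Z_range: "Z k t \<in> range T"
  unfolding Z_def psi_def using phi_MC T_range by blast

lemma T_mk: "T (mk k t) = Z k t"
  unfolding mk_def by (rule T_kap[OF Z_range])

lemma MC_eq: "MC e \<rho> \<phi> k t = lincomb e (mk k t)"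
proof -
  have "MC e \<rho> \<phi> k t = inv_into (gset e) \<rho> (T (mk k t))"
    unfolding MC_def T_mk Z_def psi_def ..
  thus ?thesis by (simp add: inv_into_T)
qed

lemma coords_MC: "coords e (MC e \<rho> \<phi> k t) = mk k t"
  by (simp add: MC_eq)

lemma L_comp: "L t $ a = dotc \<Lambda> (Ad t (axis a 1))"
proof -
  have tt: "T (Ad t (axis a 1)) = matrix_inv (\<phi> t) ** \<rho> (e a) ** \<phi> t"
    unfolding T_Ad psi_def by (simp add: T_def lincomb_axis)
  have "AdR e \<rho> (matrix_inv (\<phi> t)) (e a) = inv_into (gset e) \<rho> (T (Ad t (axis a 1)))"
    unfolding AdR_def tt inv_inv[OF phi_inv] ..
  thus ?thesis
    by (simp add: L_def Lfield_def coadR_def pair_eq inv_into_T)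
qed

lemma I1: "dotc (L t) c = dotc \<Lambda> (Ad t c)"
proof -
  have "dotc \<Lambda> (Ad t c) = (\<Sum>a\<in>UNIV. c $ a * dotc \<Lambda> (Ad t (axis a 1)))"
    by (rule lin_expand_scalar) (simp_all add: Ad_add Ad_smult dotc_add_right dotc_scale_right)
  also have "\<dots> = dotc (L t) c" by (simp add: L_comp dotc_def mult.commute)
  finally show ?thesis by simp
qed


abbreviation "dphi t \<equiv> frechet_derivative \<phi> (at t)"

lemma phi_der: "(\<phi> has_derivative dphi t) (at t)"
  using smooth_diff[OF phi_smooth UNIV_I] frechet_derivative_works by blast

lemma tp_phi: "tpartial \<phi> k t = dphi t (axis k 1)" by (simp add: tpartial_def)

lemma psi_der: "(psi has_derivative (\<lambda>h. - (psi t ** dphi t h ** psi t))) (at t)"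
  unfolding psi_def[abs_def]
  by (rule inv_has_derivative[OF phi_der phi_inv]) (simp add: phi_inv)

lemma F_der: "((\<lambda>t. psi t ** Y ** \<phi> t) has_derivative
   (\<lambda>h. (psi t ** Y) ** dphi t h + (psi t ** 0 + (- (psi t ** dphi t h ** psi t)) ** Y) ** \<phi> t)) (at t)"
  by (rule bounded_bilinear.FDERIV[OF bb_mm bounded_bilinear.FDERIV[OF bb_mm psi_der has_derivative_const] phi_der])

lemma F_der_axis:
  "(psi t ** T c) ** tpartial \<phi> l t + (psi t ** 0 + (- (psi t ** tpartial \<phi> l t ** psi t)) ** T c) ** \<phi> t
    = T (Ad t (br c (mk l t)))"
proof -
  let ?P = "tpartial \<phi> l t"
  have "T (Ad t (br c (mk l t))) = psi t ** (T c ** (?P ** psi t) - (?P ** psi t) ** T c) ** \<phi> t"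
    by (simp add: T_Ad T_br T_mk Z_def)
  also have "\<dots> = psi t ** T c ** ?P ** (psi t ** \<phi> t) - psi t ** ?P ** psi t ** T c ** \<phi> t"
    by (simp add: mm_diff_left mm_diff_right matrix_mul_assoc)
  also have "\<dots> = psi t ** T c ** ?P - psi t ** ?P ** psi t ** T c ** \<phi> t"
    by (simp add: psi_phi)
  finally show ?thesis by (simp add: mm_uminus_right matrix_mul_assoc)
qed

abbreviation "dchi t \<equiv> frechet_derivative \<chi>' (at (\<xi> t))"
abbreviation "dxi t \<equiv> frechet_derivative \<xi> (at t)"

lemma chi_holo: "holo_vec_on U \<chi>'" using chart unfolding orbit_chart_def by blast

lemma chi_diff: "\<chi>' differentiable (at (\<xi> t))"
  using chi_holo xi_U smooth_diff unfolding holo_vec_on_def by blast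

lemma xi_der: "(\<xi> has_derivative dxi t) (at t)"
  using smooth_diff[OF xi_smooth UNIV_I] frechet_derivative_works by blast

lemma L_chi: "L = \<chi>' \<circ> \<xi>" by (simp add: fun_eq_iff L_def xi_L)

lemma L_der: "(L has_derivative (\<lambda>h. dchi t (dxi t h))) (at t)"
proof -
  have "((\<chi>' \<circ> \<xi>) has_derivative (dchi t \<circ> dxi t)) (at t)"
    by (rule diff_chain_at[OF xi_der]) (use chi_diff frechet_derivative_works in blast)
  thus ?thesis by (simp add: L_chi o_def)
qed

lemma tp_L: "tpartial L l t = dchi t (tpartial \<xi> l t)"
proof -
  have "(\<lambda>h. dchi t (dxi t h)) = frechet_derivative L (at t)" by (rule frechet_derivative_at[OF L_der])
  hence "frechet_derivative L (at t) (axis l 1) = dchi t (dxi t (axis l 1))" by metis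
  thus ?thesis by (simp add: tpartial_def)
qed

lemma tp_L_comp: "tpartial L l t $ a = dotc (L t) (br (axis a 1) (mk l t))"
proof -
  define Y where "Y = T (axis a 1)"
  have eq: "(\<lambda>t. L t $ a) = (\<lambda>t. dotc \<Lambda> (kap (psi t ** Y ** \<phi> t)))"
    by (simp add: fun_eq_iff L_comp Ad_def Y_def)
  have d1: "((\<lambda>t. L t $ a) has_derivative (\<lambda>h. dotc \<Lambda> (kap ((psi t ** Y) ** dphi t h + (psi t ** 0 + (- (psi t ** dphi t h ** psi t)) ** Y) ** \<phi> t)))) (at t)"
    unfolding eq
    by (rule linear_has_derivative_comp[OF linear_dotc_right linear_has_derivative_comp[OF kap_linear F_der]])
  have d2: "((\<lambda>t. L t $ a) has_derivative (\<lambda>h. dchi t (dxi t h) $ a)) (at t)"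
    using bounded_linear.has_derivative[OF bounded_linear_vec_nth L_der] .
  have "dchi t (dxi t (axis l 1)) $ a = dotc \<Lambda> (kap ((psi t ** Y) ** dphi t (axis l 1) + (psi t ** 0 + (- (psi t ** dphi t (axis l 1) ** psi t)) ** Y) ** \<phi> t))"
    using has_derivative_unique[OF d2 d1] by meson
  also have "\<dots> = dotc \<Lambda> (Ad t (br (axis a 1) (mk l t)))"
    using F_der_axis[where c="axis a 1" and l=l and t=t] unfolding Y_def tp_phi by simp
  also have "\<dots> = dotc (L t) (br (axis a 1) (mk l t))" by (simp add: I1)
  finally show ?thesis unfolding tp_L by (simp add: tpartial_def)
qed

lemma tp_L_adstar: "tpartial L l t = adstarR e R (MC e \<rho> \<phi> l t) (L t)"
  by (simp add: vec_eq_iff tp_L_comp MC_eq adstar_eq)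


abbreviation "dP k t \<equiv> frechet_derivative (tpartial \<phi> k) (at t)"

lemma Pk_der: "(tpartial \<phi> k has_derivative dP k t) (at t)"
  using smooth_tpartial_diff[OF phi_smooth UNIV_I] frechet_derivative_works by blast

lemma Z_der: "(Z k has_derivative (\<lambda>h. tpartial \<phi> k t ** (- (psi t ** dphi t h ** psi t)) + dP k t h ** psi t)) (at t)"
  unfolding Z_def[abs_def] by (rule bounded_bilinear.FDERIV[OF bb_mm Pk_der psi_der])

lemma mk_der: "(mk k has_derivative (\<lambda>h. kap (tpartial \<phi> k t ** (- (psi t ** dphi t h ** psi t)) + dP k t h ** psi t))) (at t)"
  unfolding mk_def[abs_def] by (rule linear_has_derivative_comp[OF kap_linear Z_der])

lemma tp_mk: "tpartial (mk k) l t = kap (tpartial \<phi> k t ** (- (psi t ** tpartial \<phi> l t ** psi t)) + dP k t (axis l 1) ** psi t)"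
proof -
  have eq: "(\<lambda>h. kap (tpartial \<phi> k t ** (- (psi t ** dphi t h ** psi t)) + dP k t h ** psi t)) = frechet_derivative (mk k) (at t)"
    by (rule frechet_derivative_at[OF mk_der])
  have "frechet_derivative (mk k) (at t) (axis l 1) = kap (tpartial \<phi> k t ** (- (psi t ** dphi t (axis l 1) ** psi t)) + dP k t (axis l 1) ** psi t)"
    unfolding eq[symmetric] by (rule refl)
  thus ?thesis by (simp add: tpartial_def)
qed

lemma dP_sym: "dP k t (axis l 1) = dP l t (axis k 1)"
proof -
  have e1: "(\<lambda>y. dphi y (axis k 1)) = tpartial \<phi> k" by (simp add: fun_eq_iff tpartial_def)
  have e2: "(\<lambda>y. dphi y (axis l 1)) = tpartial \<phi> l" by (simp add: fun_eq_iff tpartial_def)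
  show ?thesis
    by (rule schwarz[where f = \<phi> and f' = dphi and x = t, OF phi_der]) (simp_all only: e1 e2 Pk_der)
qed

lemma mk_curv: "tpartial (mk k) l t - tpartial (mk l) k t = br (mk l t) (mk k t)"
proof -
  let ?Pk = "tpartial \<phi> k t" and ?Pl = "tpartial \<phi> l t"
  have "tpartial (mk k) l t - tpartial (mk l) k t
     = kap ((?Pk ** (- (psi t ** ?Pl ** psi t)) + dP k t (axis l 1) ** psi t) - (?Pl ** (- (psi t ** ?Pk ** psi t)) + dP l t (axis k 1) ** psi t))"
    unfolding tp_mk linear_diff[OF kap_linear] ..
  also have "(?Pk ** (- (psi t ** ?Pl ** psi t)) + dP k t (axis l 1) ** psi t) - (?Pl ** (- (psi t ** ?Pk ** psi t)) + dP l t (axis k 1) ** psi t)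
      = Z l t ** Z k t - Z k t ** Z l t"
    unfolding dP_sym Z_def by (simp add: mm_uminus_left matrix_mul_assoc)
  also have "\<dots> = T (br (mk l t) (mk k t))" by (simp add: T_br T_mk)
  finally show ?thesis by simp
qed


lemma tp_of_der: "(f has_derivative f') (at t) \<Longrightarrow> tpartial f l t = f' (axis l 1)"
  using frechet_derivative_at by (metis tpartial_def)

abbreviation "dH k x \<equiv> frechet_derivative (H k) (at x)"

lemma H_diff: "H k differentiable (at x)"
  using H[of k] smooth_diff unfolding holo_scalar_on_def by blast

lemma H_clin: "dH k x (c *s v) = c * dH k x v"
  using H[of k] unfolding holo_scalar_on_def by blast

lemma H_lin: "linear (dH k x)"
  using H_diff frechet_derivative_works has_derivative_linear by blast

lemma Lag_eq: "Lag e \<rho> \<Lambda> H \<phi> k = (\<lambda>t. dotc (L t) (mk k t) - H k (L t))"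
  by (simp add: fun_eq_iff Lag_def L_def[symmetric] pair_eq coords_MC)

lemma tp_Lag: "tpartial (Lag e \<rho> \<Lambda> H \<phi> k) l t
   = dotc (L t) (tpartial (mk k) l t) + dotc (tpartial L l t) (mk k t) - dH k (L t) (tpartial L l t)"
proof -
  have dL: "(L has_derivative frechet_derivative L (at t)) (at t)"
    using L_der frechet_derivative_works differentiableI by blast
  have dm: "(mk k has_derivative frechet_derivative (mk k) (at t)) (at t)"
    using mk_der frechet_derivative_works differentiableI by blast
  have dHL: "((\<lambda>t. H k (L t)) has_derivative (\<lambda>h. dH k (L t) (frechet_derivative L (at t) h))) (at t)"
    by (rule has_derivative_compose[OF dL]) (use H_diff frechet_derivative_works in blast)
  have "((\<lambda>t. dotc (L t) (mk k t) - H k (L t)) has_derivative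
     (\<lambda>h. (dotc (L t) (frechet_derivative (mk k) (at t) h) + dotc (frechet_derivative L (at t) h) (mk k t)) - dH k (L t) (frechet_derivative L (at t) h))) (at t)"
    by (rule has_derivative_diff[OF bounded_bilinear.FDERIV[OF bb_dotc dL dm] dHL])
  from tp_of_der[OF this, of l] show ?thesis
    unfolding Lag_eq by (simp add: tpartial_def)
qed

lemma chi_clin: "dchi t (c *s v) = c *s dchi t v"
  using chi_holo xi_U unfolding holo_vec_on_def by blast

lemma chi_lin: "linear (dchi t)"
  using chi_diff frechet_derivative_works has_derivative_linear by blast

definition "Om t v w = (\<Sum>m\<in>UNIV. \<Sum>n\<in>UNIV. \<omega> (\<xi> t) m n * v $ m * w $ n)"

lemma Dk_eq: "frechet_derivative (H k \<circ> \<chi>') (at (\<xi> t)) = dH k (L t) \<circ> dchi t"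
proof -
  have "H k differentiable at (\<chi>' (\<xi> t))" by (rule H_diff)
  thus ?thesis using frechet_derivative_compose[OF chi_diff] by (simp add: L_def xi_L)
qed

lemma dH_dchi: "dH k (L t) (dchi t w) = Om t (tpartial \<xi> k t) w"
proof -
  have ELn: "dH k (L t) (dchi t (axis n 1)) = (\<Sum>m\<in>UNIV. \<omega> (\<xi> t) m n * tpartial \<xi> k t $ m)" for n
    using EL[of k n t] unfolding Upsilon_def Dk_eq comp_apply by simp
  have "dH k (L t) (dchi t w) = (\<Sum>n\<in>UNIV. w $ n * dH k (L t) (dchi t (axis n 1)))"
    by (rule lin_expand_scalar[of "\<lambda>w. dH k (L t) (dchi t w)"])
       (simp_all add: linear_add[OF chi_lin] linear_add[OF H_lin] chi_clin H_clin)
  also have "\<dots> = (\<Sum>n\<in>UNIV. w $ n * (\<Sum>m\<in>UNIV. \<omega> (\<xi> t) m n * tpartial \<xi> k t $ m))"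
    by (simp only: ELn)
  also have "\<dots> = Om t (tpartial \<xi> k t) w"
    unfolding Om_def sum_distrib_left by (subst sum.swap) (simp only: ac_simps)
  finally show ?thesis .
qed

lemma chiL: "\<chi>' (\<xi> t) = L t" by (simp add: L_def xi_L)

lemma KKS_br:
  assumes a1: "dchi t v = adstarR e R (lincomb e x) (L t)" and a2: "dchi t w = adstarR e R (lincomb e y) (L t)"
  shows "Om t v w = dotc (L t) (br x y)"
proof -
  have k0: "(\<forall>m n. \<omega> (\<xi> t) m n = - \<omega> (\<xi> t) n m) \<and>
        (\<forall>X\<in>gset e. \<forall>Y\<in>gset e. \<forall>v w.
           frechet_derivative \<chi>' (at (\<xi> t)) v = adstarR e R X (\<chi>' (\<xi> t)) \<longrightarrow>
           frechet_derivative \<chi>' (at (\<xi> t)) w = adstarR e R Y (\<chi>' (\<xi> t)) \<longrightarrow>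
           (\<Sum>m\<in>UNIV. \<Sum>n\<in>UNIV. \<omega> (\<xi> t) m n * v $ m * w $ n) = pair e (\<chi>' (\<xi> t)) (brR R X Y))"
    using KKS[unfolded KKS_coeffs_def] xi_U by (rule bspec)
  have k1: "\<forall>X\<in>gset e. \<forall>Y\<in>gset e. \<forall>v w.
           dchi t v = adstarR e R X (L t) \<longrightarrow>
           dchi t w = adstarR e R Y (L t) \<longrightarrow>
           (\<Sum>m\<in>UNIV. \<Sum>n\<in>UNIV. \<omega> (\<xi> t) m n * v $ m * w $ n) = pair e (L t) (brR R X Y)"
    using k0[THEN conjunct2] unfolding chiL .
  have "(\<Sum>m\<in>UNIV. \<Sum>n\<in>UNIV. \<omega> (\<xi> t) m n * v $ m * w $ n) = pair e (L t) (brR R (lincomb e x) (lincomb e y))"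
    using k1 gset_lincomb a1 a2 by blast
  thus ?thesis by (simp add: Om_def pair_eq coords_brR)
qed

lemma dchi_vk: "dchi t (tpartial \<xi> k t) = adstarR e R (lincomb e (mk k t)) (L t)"
  using tp_L[of k t] tp_L_adstar[of k t] MC_eq by simp

lemma A1: "dH k (L t) (tpartial L l t) = dotc (L t) (br (mk k t) (mk l t))"
  unfolding tp_L dH_dchi by (rule KKS_br[OF dchi_vk dchi_vk])

definition "gH k t = (\<chi> a. dH k (L t) (axis a 1))"

lemma A2: "dotc (L t) (br (mk k t) y) = dotc (L t) (br (gH k t) y)"
proof -
  have r0: "\<forall>u\<in>U. inj (frechet_derivative \<chi>' (at u)) \<and>
        range (frechet_derivative \<chi>' (at u)) = {adstarR e R X (\<chi>' u) | X. X \<in> gset e}"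
    using chart[unfolded orbit_chart_def, THEN conjunct2, THEN conjunct2, THEN conjunct2, THEN conjunct2] .
  have r: "range (dchi t) = {adstarR e R X (\<chi>' (\<xi> t)) | X. X \<in> gset e}"
    using bspec[OF r0 xi_U] by (rule conjunct2)
  have "adstarR e R (lincomb e y) (L t) \<in> range (dchi t)"
    unfolding r chiL using gset_lincomb by blast
  then obtain w where w: "dchi t w = adstarR e R (lincomb e y) (L t)"
    by (metis rangeE)
  have "dotc (L t) (br (mk k t) y) = Om t (tpartial \<xi> k t) w"
    by (rule KKS_br[OF dchi_vk w, symmetric])
  also have "\<dots> = dH k (L t) (dchi t w)" by (rule dH_dchi[symmetric])
  also have "\<dots> = (\<Sum>a\<in>UNIV. (dchi t w) $ a * dH k (L t) (axis a 1))"
    by (rule lin_expand_scalar) (simp_all add: linear_add[OF H_lin] H_clin)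
  also have "\<dots> = (\<Sum>a\<in>UNIV. gH k t $ a * dotc (L t) (br (axis a 1) y))"
    unfolding w adstar_eq by (simp add: gH_def mult.commute)
  also have "\<dots> = dotc (L t) (br (gH k t) y)" by (rule br_expand_left[symmetric])
  finally show ?thesis .
qed

lemma PBR_eq: "PBR e R (H k) (H l) (L t) = dotc (L t) (br (gH k t) (gH l t))"
  by (simp add: PBR_def grad_def gH_def pair_eq coords_brR)

lemma dL_mk: "dotc (tpartial L l t) (mk k t) = dotc (L t) (br (mk k t) (mk l t))"
proof -
  have "dotc (tpartial L l t) (mk k t) = (\<Sum>a\<in>UNIV. mk k t $ a * dotc (L t) (br (axis a 1) (mk l t)))"
    by (simp add: dotc_def tp_L_comp mult.commute)
  also have "\<dots> = dotc (L t) (br (mk k t) (mk l t))" by (rule br_expand_left[symmetric])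
  finally show ?thesis .
qed

lemma main_eq: "tpartial (Lag e \<rho> \<Lambda> H \<phi> k) l t - tpartial (Lag e \<rho> \<Lambda> H \<phi> l) k t
   = - PBR e R (H k) (H l) (L t)"
proof -
  have "tpartial (Lag e \<rho> \<Lambda> H \<phi> k) l t - tpartial (Lag e \<rho> \<Lambda> H \<phi> l) k t
      = dotc (L t) (tpartial (mk k) l t - tpartial (mk l) k t)"
    unfolding tp_Lag dL_mk A1 dotc_diff_right by simp
  also have "\<dots> = dotc (L t) (br (mk l t) (mk k t))" by (simp add: mk_curv)
  also have "\<dots> = - dotc (L t) (br (mk k t) (mk l t))"
    by (subst br_anti) (simp add: dotc_minus_right)
  also have "dotc (L t) (br (mk k t) (mk l t)) = dotc (L t) (br (gH k t) (mk l t))" by (rule A2)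
  also have "\<dots> = - dotc (L t) (br (mk l t) (gH k t))"
    by (subst br_anti) (simp add: dotc_minus_right)
  also have "dotc (L t) (br (mk l t) (gH k t)) = dotc (L t) (br (gH l t) (gH k t))" by (rule A2)
  also have "\<dots> = - dotc (L t) (br (gH k t) (gH l t))"
    by (subst br_anti) (simp add: dotc_minus_right)
  finally show ?thesis by (simp add: PBR_eq)
qed

end



theorem mainTheorem6:
  fixes e :: "'d::finite \<Rightarrow> complex^'n^'n"
    and R :: "complex^'n^'n \<Rightarrow> complex^'n^'n"
    and \<rho> :: "complex^'n^'n \<Rightarrow> complex^'m^'m"
    and \<Lambda> :: "complex^'d"
    and H :: "'N::finite \<Rightarrow> complex^'d \<Rightarrow> complex"
    and \<phi> :: "real^'N \<Rightarrow> complex^'m^'m"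
    and U :: "(complex^'c) set"
    and \<chi>' :: "complex^'c \<Rightarrow> complex^'d"
    and \<omega> :: "complex^'c \<Rightarrow> 'c \<Rightarrow> 'c \<Rightarrow> complex"
    and \<xi> :: "real^'N \<Rightarrow> complex^'c"
  assumes g: "matrix_lie_algebra_basis e"
    and R: "mCYBE e R"
    and rep: "faithful_rep e R \<rho>"
    and H: "\<And>k. holo_scalar_on UNIV (H k)"
    and phi_smooth: "smooth_on UNIV \<phi>"
    and phi_GR: "\<And>t. \<phi> t \<in> GR e \<rho>"
    and phi_MC: "\<And>t k. tpartial \<phi> k t ** matrix_inv (\<phi> t) \<in> \<rho> ` gset e"
    and chart: "orbit_chart e R \<rho> \<Lambda> U \<chi>'"
    and KKS: "KKS_coeffs e R U \<chi>' \<omega>"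
    and xi_smooth: "smooth_on UNIV \<xi>"
    and xi_U: "\<And>t. \<xi> t \<in> U"
    and xi_L: "\<And>t. \<chi>' (\<xi> t) = Lfield e \<rho> \<Lambda> \<phi> t"
    and EL: "\<And>k n t. Upsilon \<chi>' \<omega> H \<xi> k n t = 0"
  shows "(\<forall>k l t. tpartial (Lag e \<rho> \<Lambda> H \<phi> k) l t - tpartial (Lag e \<rho> \<Lambda> H \<phi> l) k t
                  = - PBR e R (H k) (H l) (Lfield e \<rho> \<Lambda> \<phi> t))
       \<and> ((\<forall>k l t. tpartial (Lag e \<rho> \<Lambda> H \<phi> k) l t = tpartial (Lag e \<rho> \<Lambda> H \<phi> l) k t)
          \<longleftrightarrow> (\<forall>k l t. PBR e R (H k) (H l) (Lfield e \<rho> \<Lambda> \<phi> t) = 0))"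
  proof -
  interpret M: main_setup e R \<rho> \<Lambda> H \<phi> U \<chi>' \<omega> \<xi>
    by (unfold_locales) (fact g R rep H phi_smooth phi_GR phi_MC chart KKS xi_smooth xi_U xi_L EL)+
  have me: "\<And>k l t. tpartial (Lag e \<rho> \<Lambda> H \<phi> k) l t - tpartial (Lag e \<rho> \<Lambda> H \<phi> l) k t
                  = - PBR e R (H k) (H l) (Lfield e \<rho> \<Lambda> \<phi> t)"
    using M.main_eq unfolding M.L_def .
  show ?thesis
  proof (intro conjI allI)
    show "\<And>k l t. tpartial (Lag e \<rho> \<Lambda> H \<phi> k) l t - tpartial (Lag e \<rho> \<Lambda> H \<phi> l) k t
                  = - PBR e R (H k) (H l) (Lfield e \<rho> \<Lambda> \<phi> t)" by (rule me)
    have "\<And>k l t. (tpartial (Lag e \<rho> \<Lambda> H \<phi> k) l t = tpartial (Lag e \<rho> \<Lambda> H \<phi> l) k t)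
        \<longleftrightarrow> PBR e R (H k) (H l) (Lfield e \<rho> \<Lambda> \<phi> t) = 0"
      using me by (metis eq_iff_diff_eq_0 neg_equal_0_iff_equal)
    thus "(\<forall>k l t. tpartial (Lag e \<rho> \<Lambda> H \<phi> k) l t = tpartial (Lag e \<rho> \<Lambda> H \<phi> l) k t)
          \<longleftrightarrow> (\<forall>k l t. PBR e R (H k) (H l) (Lfield e \<rho> \<Lambda> \<phi> t) = 0)" by blast
  qed
qed

end
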